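(* Let $\mathcal G$ be the game induced by an SG-LCS, $x\in\{0,1\}$, and let $T\subseteq S$ be a regular set of configurations. There exist regular SG-LCS strategies $\mathtt{force}^x(\mathcal G,T)$ for Player $x$ and $\mathtt{avoid}^{1-x}(\mathcal G,T)$ for Player $1-x$ such that $\mathrm{Force}^x(\mathcal G,T)\subseteq W^x(\widehat{\mathtt{force}^x(\mathcal G,T)},F^{1-x}_{all}(\mathcal G))(\mathcal G,(\Diamond T)^{>0})$ and $\mathrm{Avoid}^{1-x}(\mathcal G,T)\subseteq V^{1-x}(\widehat{\mathtt{avoid}^{1-x}(\mathcal G,T)},F^{x}_{all}(\mathcal G))(\mathcal G,\Box(S\setminus T))$.
   Context: An SG-LCS is a tuple $\mathcal L=(\mathtt S,\mathtt S^0,\mathtt S^1,\mathtt C,\mathtt M,\mathtt T,\lambda,\mathrm{Col})$: $\mathtt S$ finite set of control states partitioned into $\mathtt S^0,\mathtt S^1$; $\mathtt C$ finite set of channels; $\mathtt M$ finite message alphabet; $\mathtt T$ finite set of transitions $\mathtt s\xrightarrow{op}\mathtt s'$ with $op\in\{c!m,c?m,\mathtt{nop}\}$; $0<\lambda<1$; $\mathrm{Col}$ a coloring of control states. The induced game $\mathcal G=(S,S^0,S^1,S^R,\to,P,\mathrm{Col})$ has $S=\mathtt S\times(\mathtt M^* )^{\mathtt C}\times\{0,1\}$, $S^x=\mathtt S^x\times(\mathtt M^* )^{\mathtt C}\times\{1\}$, $S^R=\mathtt S\times(\mathtt M^* )^{\mathtt C}\times\{0\}$; $(\mathtt s,\mathtt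 x,1)\to(\mathtt s',\mathtt x',0)$ iff there is $\mathtt s\xrightarrow{op}\mathtt s'$ in $\mathtt T$ with $\mathtt x'=\mathtt x$ if $op=\mathtt{nop}$, $\mathtt x'=\mathtt x[c\mapsto\mathtt x(c)\cdot m]$ if $op=c!m$, $\mathtt x(c)=m\cdot w$ and $\mathtt x'=\mathtt x[c\mapsto w]$ if $op=c?m$ (if no such successor, $(\mathtt s,\mathtt x,1)\to(\mathtt s,\mathtt x,0)$ is added); $(\mathtt s,\mathtt x,0)\to(\mathtt s,\mathtt x',1)$ for every componentwise subword $\mathtt x'$ of $\mathtt x$, with probability $P$ induced by losing each message independently with probability $\lambda$. Write $\mathrm{Pre}(Q)=\{s:\exists s'\in Q,\ s\to s'\}$, $\widetilde{\mathrm{Pre}}(Q)=S\setminus\mathrm{Pre}(S\setminus Q)$. Force sets: $R_0=T$, $R_{\alpha+1}=R_\alpha\cup(S^R\cap\mathrm{Pre}(R_\alpha))\cup(S^x\cap\mathrm{Pre}(R_\alpha))\cup(S^{1-x}\cap\widetilde{\mathrm{Pre}}(R_\alpha))$, $R_\lambda=\bigcup_{\alpha<\lambda}R_\alpha$; with $\gamma$ least such that $R_{\gamma+1}=R_\gamma$, $\mathrm{Force}^x(\mathcal G,T)=R_\gamma$ and $\mathrm{Avoid}^{1-x}(\mathcal G,T)=S\setminus R_\gamma$. A set of channel contents is regular if it is a finite union of products $\prod_cL_c$ of regular languages; a set of configurations $P$ is regular if each $\{\mathtt x:(\mathtt s,\mathtt x,i)\in P\}$ is regular. A regular SG-LCS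 strategy for Player $y$ is a finite list of guarded rules $(\mathtt s_i,X_i\xrightarrow{op_i}\mathtt s_i')$ with $X_i$ regular, $\mathtt s_i\xrightarrow{op_i}\mathtt s_i'\in\mathtt T$, $\mathtt s_i\in\mathtt S^y$, if $op_i=c?m$ then every $\mathtt x\in X_i$ has $\mathtt x(c)$ beginning with $m$, and guards with the same control state disjoint; its induced memoryless partial strategy $\hat{\mathtt f}$ maps $(\mathtt s_i,\mathtt x,1)$ with $\mathtt x\in X_i$ to the configuration reached via $\mathtt s_i\xrightarrow{op_i}\mathtt s_i'$, undefined elsewhere. Strategies of Player $y$ are partial functions from finite paths ending in $S^y$ to successors; $F^y_{all}(\mathcal G)$ is the set of all of them. For total strategies and initial configuration $s$, $\mathcal P_{\mathcal G,s,f^0,f^1}$ is the induced probability measure on runs; for partial strategies a probability statement must hold for all total extensions. $W^x(f,F)(\mathcal G,\varphi^{>0})=\{s:\mathcal P_{\mathcal G,s,f,g}(\varphi)>0$ for all total $g\in F\}$; $V^{y}(f,F)(\mathcal G,\varphi)$ is the set of $s$ such that for all $g\in F$ every run from $s$ consistent with $f$ and $g$ satisfies $\varphi$. $\Diamond T$: the run visits $T$; $\Box Q$: the run stays in $Q$. *)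

theory Defs
  imports "HOL-Probability.Probability" "HOL-Library.Sublist"
begin

datatype ('c, 'm) lcs_op = Send 'c 'm | Recv 'c 'm | Nop

record ('s, 'c, 'm) sglcs =
  states  :: "'s set"
  states0 :: "'s set"
  states1 :: "'s set"
  trans   :: "('s \<times> ('c, 'm) lcs_op \<times> 's) set"
  lam     :: real
  col     :: "'s \<Rightarrow> nat"

definition wf_sglcs :: "('s, 'c::finite, 'm::finite) sglcs \<Rightarrow> bool" where
  "wf_sglcs L \<longleftrightarrow> finite (states L) \<and> states0 L \<inter> states1 L = {} \<and>
     states0 L \<union> states1 L = states L \<and> finite (trans L) \<and>
     trans L \<subseteq> states L \<times> UNIV \<times> states L \<and> 0 < lam L \<and> lam L < 1"

text \<open>Configurations (s, x, b): b = True encodes 1 (player), b = False encodes 0 (random).\<close>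
type_synonym ('s, 'c, 'm) conf = "'s \<times> ('c \<Rightarrow> 'm list) \<times> bool"

fun op_rel :: "('c, 'm) lcs_op \<Rightarrow> ('c \<Rightarrow> 'm list) \<Rightarrow> ('c \<Rightarrow> 'm list) \<Rightarrow> bool" where
  "op_rel Nop x x' \<longleftrightarrow> x' = x"
| "op_rel (Send c m) x x' \<longleftrightarrow> x' = x(c := x c @ [m])"
| "op_rel (Recv c m) x x' \<longleftrightarrow> (\<exists>w. x c = m # w \<and> x' = x(c := w))"

fun op_apply :: "('c, 'm) lcs_op \<Rightarrow> ('c \<Rightarrow> 'm list) \<Rightarrow> ('c \<Rightarrow> 'm list)" where
  "op_apply Nop x = x"
| "op_apply (Send c m) x = x(c := x c @ [m])"
| "op_apply (Recv c m) x = x(c := tl (x c))"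

definition confs :: "('s, 'c, 'm) sglcs \<Rightarrow> ('s, 'c, 'm) conf set" where
  "confs L = {(s, x, b). s \<in> states L}"

definition ctrl :: "('s, 'c, 'm) sglcs \<Rightarrow> nat \<Rightarrow> 's set" where
  "ctrl L y = (if y = 0 then states0 L else states1 L)"

definition pstates :: "('s, 'c, 'm) sglcs \<Rightarrow> nat \<Rightarrow> ('s, 'c, 'm) conf set" where
  "pstates L y = {(s, x, b). s \<in> ctrl L y \<and> b}"

definition rstates :: "('s, 'c, 'm) sglcs \<Rightarrow> ('s, 'c, 'm) conf set" where
  "rstates L = {(s, x, b). s \<in> states L \<and> \<not> b}"

definition edge :: "('s, 'c, 'm) sglcs \<Rightarrow> ('s, 'c, 'm) conf \<Rightarrow> ('s, 'c, 'm) conf \<Rightarrow> bool" where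
  "edge L c c' \<longleftrightarrow>
    (\<exists>s x s' x'. c = (s, x, True) \<and> c' = (s', x', False) \<and> s \<in> states L \<and>
       ((\<exists>op. (s, op, s') \<in> trans L \<and> op_rel op x x') \<or>
        ((\<nexists>op t v. (s, op, t) \<in> trans L \<and> op_rel op x v) \<and> s' = s \<and> x' = x))) \<or>
    (\<exists>s x x'. c = (s, x, False) \<and> c' = (s, x', True) \<and> s \<in> states L \<and>
       (\<forall>ch. subseq (x' ch) (x ch)))"

fun lose :: "real \<Rightarrow> 'm list \<Rightarrow> 'm list pmf" where
  "lose p [] = return_pmf []"
| "lose p (m # w) = bernoulli_pmf p \<bind> (\<lambda>lost. lose p w \<bind> (\<lambda>w'. return_pmf (if lost then w' else m # w')))"

definition lossy :: "('s, 'c::finite, 'm) sglcs \<Rightarrow> ('s, 'c, 'm) conf \<Rightarrow> ('s, 'c, 'm) conf pmf" where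
  "lossy L c = (case c of (s, x, b) \<Rightarrow>
     map_pmf (\<lambda>x'. (s, x', True)) (Pi_pmf UNIV [] (\<lambda>ch. lose (lam L) (x ch))))"

definition Pre :: "('s, 'c, 'm) sglcs \<Rightarrow> ('s, 'c, 'm) conf set \<Rightarrow> ('s, 'c, 'm) conf set" where
  "Pre L Q = {c \<in> confs L. \<exists>c' \<in> Q. edge L c c'}"

definition tPre :: "('s, 'c, 'm) sglcs \<Rightarrow> ('s, 'c, 'm) conf set \<Rightarrow> ('s, 'c, 'm) conf set" where
  "tPre L Q = confs L - Pre L (confs L - Q)"

text \<open>The transfinite sequence R_alpha is increasing and stabilises at the least fixed point
  of the (monotone) one-step operator, which is how Force is defined here.\<close>
definition Force :: "('s, 'c, 'm) sglcs \<Rightarrow> nat \<Rightarrow> ('s, 'c, 'm) conf set \<Rightarrow> ('s, 'c, 'm) conf set" where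
  "Force L x T = lfp (\<lambda>R. T \<union> R \<union> (rstates L \<inter> Pre L R) \<union> (pstates L x \<inter> Pre L R)
                          \<union> (pstates L (1 - x) \<inter> tPre L R))"

definition Avoid :: "('s, 'c, 'm) sglcs \<Rightarrow> nat \<Rightarrow> ('s, 'c, 'm) conf set \<Rightarrow> ('s, 'c, 'm) conf set" where
  "Avoid L x T = confs L - Force L x T"

definition regular_lang :: "'m list set \<Rightarrow> bool" where
  "regular_lang A \<longleftrightarrow> (\<exists>(Q :: nat set) q0 \<delta> F. finite Q \<and> q0 \<in> Q \<and> (\<forall>q\<in>Q. \<forall>a. \<delta> q a \<in> Q) \<and>
       F \<subseteq> Q \<and> A = {w. foldl \<delta> q0 w \<in> F})"

definition regular_contents :: "('c \<Rightarrow> 'm list) set \<Rightarrow> bool" where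
  "regular_contents X \<longleftrightarrow> (\<exists>Ls :: ('c \<Rightarrow> 'm list set) set. finite Ls \<and>
       (\<forall>Lc \<in> Ls. \<forall>c. regular_lang (Lc c)) \<and> X = (\<Union>Lc \<in> Ls. {x. \<forall>c. x c \<in> Lc c}))"

definition regular_confs :: "('s, 'c, 'm) conf set \<Rightarrow> bool" where
  "regular_confs P \<longleftrightarrow> (\<forall>s b. regular_contents {x. (s, x, b) \<in> P})"

type_synonym ('s, 'c, 'm) strategy = "('s, 'c, 'm) conf list \<Rightarrow> ('s, 'c, 'm) conf option"

definition is_strategy :: "('s, 'c, 'm) sglcs \<Rightarrow> nat \<Rightarrow> ('s, 'c, 'm) strategy \<Rightarrow> bool" where
  "is_strategy L y f \<longleftrightarrow> (\<forall>h c. f h = Some c \<longrightarrow> h \<noteq> [] \<and> last h \<in> pstates L y \<and> edge L (last h) c)"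

definition total_strategy :: "('s, 'c, 'm) sglcs \<Rightarrow> nat \<Rightarrow> ('s, 'c, 'm) strategy \<Rightarrow> bool" where
  "total_strategy L y f \<longleftrightarrow> is_strategy L y f \<and> (\<forall>h. h \<noteq> [] \<and> last h \<in> pstates L y \<longrightarrow> f h \<noteq> None)"

definition extends_strategy :: "('s, 'c, 'm) strategy \<Rightarrow> ('s, 'c, 'm) strategy \<Rightarrow> bool" where
  "extends_strategy f f' \<longleftrightarrow> (\<forall>h c. f h = Some c \<longrightarrow> f' h = Some c)"

type_synonym ('s, 'c, 'm) rule = "'s \<times> ('c \<Rightarrow> 'm list) set \<times> ('c, 'm) lcs_op \<times> 's"

definition regular_strategy :: "('s, 'c, 'm) sglcs \<Rightarrow> nat \<Rightarrow> ('s, 'c, 'm) rule list \<Rightarrow> bool" where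
  "regular_strategy L y rs \<longleftrightarrow>
     (\<forall>(s, X, op, s') \<in> set rs. regular_contents X \<and> (s, op, s') \<in> trans L \<and> s \<in> ctrl L y \<and>
        (\<forall>c m. op = Recv c m \<longrightarrow> (\<forall>x \<in> X. \<exists>w. x c = m # w))) \<and>
     (\<forall>i < length rs. \<forall>j < length rs. i \<noteq> j \<longrightarrow> fst (rs ! i) = fst (rs ! j) \<longrightarrow>
        fst (snd (rs ! i)) \<inter> fst (snd (rs ! j)) = {})"

definition induced_strategy :: "('s, 'c, 'm) rule list \<Rightarrow> ('s, 'c, 'm) strategy" where
  "induced_strategy rs h = (if h = [] then None else
     (case last h of (s, x, b) \<Rightarrow>
        if \<not> b then None else
        (case find (\<lambda>(s', X, op, t). s' = s \<and> x \<in> X) rs of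
           None \<Rightarrow> None
         | Some (_, _, op, t) \<Rightarrow> Some (t, op_apply op x, False))))"

text \<open>reach_n n h: probability, under the strategy profile sigma (sigma y is the strategy of
  Player y), of visiting T within n further steps, starting from history h.\<close>
fun reach_n :: "('s, 'c::finite, 'm) sglcs \<Rightarrow> (nat \<Rightarrow> ('s, 'c, 'm) strategy) \<Rightarrow> ('s, 'c, 'm) conf set
     \<Rightarrow> nat \<Rightarrow> ('s, 'c, 'm) conf list \<Rightarrow> real" where
  "reach_n L \<sigma> T 0 h = (if last h \<in> T then 1 else 0)"
| "reach_n L \<sigma> T (Suc n) h =
     (if last h \<in> T then 1 else
      (case last h of (s, x, b) \<Rightarrow>
        if \<not> b then measure_pmf.expectation (lossy L (last h)) (\<lambda>c. reach_n L \<sigma> T n (h @ [c]))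
        else reach_n L \<sigma> T n (h @ [the (\<sigma> (if s \<in> states0 L then 0 else 1) h)])))"

text \<open>P_{G,s,f^x,g^{1-x}}(Diamond T) (continuity of measure: supremum over step bounds).\<close>
definition reach_prob :: "('s, 'c::finite, 'm) sglcs \<Rightarrow> nat \<Rightarrow> ('s, 'c, 'm) strategy \<Rightarrow> ('s, 'c, 'm) strategy
     \<Rightarrow> ('s, 'c, 'm) conf set \<Rightarrow> ('s, 'c, 'm) conf \<Rightarrow> real" where
  "reach_prob L x f g T s = (SUP n. reach_n L (\<lambda>y. if y = x then f else g) T n [s])"

text \<open>W^x(f, F^{1-x}_all)(G, (Diamond T)^{>0}) -- for partial f, required for all total extensions.\<close>
definition W_reach :: "('s, 'c::finite, 'm) sglcs \<Rightarrow> nat \<Rightarrow> ('s, 'c, 'm) strategy \<Rightarrow> ('s, 'c, 'm) conf set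
     \<Rightarrow> ('s, 'c, 'm) conf set" where
  "W_reach L x f T = {s \<in> confs L. \<forall>f' g. total_strategy L x f' \<and> extends_strategy f f' \<and>
       total_strategy L (1 - x) g \<longrightarrow> reach_prob L x f' g T s > 0}"

definition consistent_run :: "('s, 'c, 'm) sglcs \<Rightarrow> ('s, 'c, 'm) strategy \<Rightarrow> (nat \<Rightarrow> ('s, 'c, 'm) conf) \<Rightarrow> bool" where
  "consistent_run L f \<rho> \<longleftrightarrow> (\<forall>i c. f (map \<rho> [0..<Suc i]) = Some c \<longrightarrow> \<rho> (Suc i) = c)"

definition is_run :: "('s, 'c, 'm) sglcs \<Rightarrow> ('s, 'c, 'm) conf \<Rightarrow> (nat \<Rightarrow> ('s, 'c, 'm) conf) \<Rightarrow> bool" where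
  "is_run L s \<rho> \<longleftrightarrow> \<rho> 0 = s \<and> (\<forall>i. edge L (\<rho> i) (\<rho> (Suc i)))"

definition V_safe :: "('s, 'c, 'm) sglcs \<Rightarrow> nat \<Rightarrow> ('s, 'c, 'm) strategy \<Rightarrow> ('s, 'c, 'm) conf set
     \<Rightarrow> ('s, 'c, 'm) conf set" where
  "V_safe L y f Q = {s \<in> confs L. \<forall>g. is_strategy L (1 - y) g \<longrightarrow>
       (\<forall>\<rho>. is_run L s \<rho> \<and> consistent_run L f \<rho> \<and> consistent_run L g \<rho> \<longrightarrow> (\<forall>i. \<rho> i \<in> Q))}"

end

theory Submission
  imports Defs "HOL-Library.Ramsey"
begin


lemma higman:
  fixes f :: "nat \<Rightarrow> ('m::finite) list"
  shows "\<exists>i j. i < j \<and> subseq (f i) (f j)"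
proof (rule ccontr)
  define bad :: "(nat \<Rightarrow> 'm list) \<Rightarrow> bool" where "bad g \<longleftrightarrow> (\<forall>i j. i < j \<longrightarrow> \<not> subseq (g i) (g j))" for g
  assume "\<not> ?thesis"
  hence "bad f" by (auto simp: bad_def)
  define ext :: "'m list list \<Rightarrow> (nat \<Rightarrow> 'm list) \<Rightarrow> bool" where
    "ext p g \<longleftrightarrow> bad g \<and> (\<forall>i<length p. g i = p ! i)" for p g
  define Pw where "Pw p w \<longleftrightarrow> (\<exists>g. ext p g \<and> g (length p) = w \<and> (\<forall>g'. ext p g' \<longrightarrow> length w \<le> length (g' (length p))))" for p w
  define step where "step p = p @ [SOME w. Pw p w]" for p
  define pre where "pre n = (step ^^ n) []" for n
  have Pw_some: "Pw p (SOME w. Pw p w)" if "\<exists>g. ext p g" for p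
  proof -
    from that obtain g0 where "ext p g0" by blast
    then obtain g where g: "ext p g" "\<forall>g'. ext p g' \<longrightarrow> length (g (length p)) \<le> length (g' (length p))"
      using ex_has_least_nat[of "ext p" g0 "\<lambda>g. length (g (length p))"] by blast
    hence "Pw p (g (length p))" unfolding Pw_def by blast
    thus ?thesis by (rule someI)
  qed
  have step_ok: "\<exists>g. ext (step p) g" if "\<exists>g. ext p g" for p
  proof -
    from Pw_some[OF that] obtain g where g: "ext p g" "g (length p) = (SOME w. Pw p w)"
      unfolding Pw_def by blast
    have "ext (step p) g" using g unfolding ext_def step_def
      by (auto simp: nth_append less_Suc_eq)
    thus ?thesis by blast
  qed
  have pre_suc: "pre (Suc n) = step (pre n)" for n by (simp add: pre_def)
  have len: "length (pre n) = n" for n by (induction n) (auto simp: pre_suc step_def pre_def)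
  have ex: "\<exists>g. ext (pre n) g" for n
  proof (induction n)
    case 0
    then show ?case using \<open>bad f\<close> by (auto simp: pre_def ext_def)
  next
    case (Suc n)
    then show ?case using step_ok pre_suc by simp
  qed
  have pfx: "pre m ! i = pre n ! i" if "n \<le> m" "i < n" for n m i
    using that
  proof (induction m)
    case 0
    then show ?case by simp
  next
    case (Suc m)
    show ?case
    proof (cases "n = Suc m")
      case True then show ?thesis by simp
    next
      case False
      hence "n \<le> m" using Suc.prems by simp
      hence "pre (Suc m) ! i = pre m ! i" using Suc.prems len[of m]
        by (simp add: pre_suc step_def nth_append)
      then show ?thesis using Suc.IH \<open>n \<le> m\<close> Suc.prems by simp
    qed
  qed
  define mbs where "mbs i = pre (Suc i) ! i" for i
  have pre_mbs: "pre n ! i = mbs i" if "i < n" for n i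
    using pfx[of "Suc i" n i] that by (simp add: mbs_def)
  have bad_mbs: "bad mbs"
    unfolding bad_def
  proof (intro allI impI)
    fix i j :: nat assume "i < j"
    obtain g where g: "ext (pre (Suc j)) g" using ex by blast
    have "g i = mbs i" "g j = mbs j" using g \<open>i<j\<close> pre_mbs[of i "Suc j"] pre_mbs[of j "Suc j"]
      by (auto simp: ext_def len)
    thus "\<not> subseq (mbs i) (mbs j)" using g \<open>i<j\<close> unfolding ext_def bad_def by metis
  qed
  have minimal: "length (mbs n) \<le> length (g' n)" if "bad g'" "\<forall>i<n. g' i = mbs i" for g' n
  proof -
    have "pre (Suc n) = pre n @ [SOME w. Pw (pre n) w]" by (simp add: pre_suc step_def)
    hence "mbs n = (SOME w. Pw (pre n) w)" by (simp add: mbs_def nth_append len)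
    hence P: "Pw (pre n) (mbs n)" using Pw_some ex by simp
    have "ext (pre n) g'" using that by (auto simp: ext_def len pre_mbs)
    thus ?thesis using P unfolding Pw_def by (auto simp: len)
  qed
  have ne: "mbs i \<noteq> []" for i
  proof
    assume "mbs i = []"
    hence "subseq (mbs i) (mbs (Suc i))" by simp
    thus False using bad_mbs by (auto simp: bad_def)
  qed
  define a where "a i = hd (mbs i)" for i
  have "finite (range a)" by simp
  then obtain a0 where inf: "infinite (a -` {a0})"
    using inf_img_fin_domE[of a UNIV] by auto
  define I where "I = a -` {a0}"
  define e where "e = enumerate I"
  have e_in: "a (e n) = a0" for n using enumerate_in_set[of I n] inf by (auto simp: e_def I_def)
  have e_mono: "m < n \<Longrightarrow> e m < e n" for m n using enumerate_mono inf by (auto simp: e_def I_def)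
  have e_le: "e 0 \<le> e n" for n using e_mono[of 0 n] by (cases n) auto
  have mbs_e: "mbs (e n) = a0 # tl (mbs (e n))" for n
    using ne[of "e n"] e_in[of n] by (cases "mbs (e n)") (auto simp: a_def)
  define k where "k = e 0"
  define g where "g i = (if i < k then mbs i else tl (mbs (e (i - k))))" for i
  have "bad g"
    unfolding bad_def
  proof (intro allI impI notI)
    fix i j :: nat assume ij: "i < j" and s: "subseq (g i) (g j)"
    show False
    proof (cases "j < k")
      case True
      then show ?thesis using s ij bad_mbs by (auto simp: g_def bad_def)
    next
      case jk: False
      show ?thesis
      proof (cases "i < k")
        case True
        hence "subseq (mbs i) (tl (mbs (e (j - k))))" using s jk by (simp add: g_def)
        hence "subseq (mbs i) (mbs (e (j - k)))"
          using mbs_e[of "j-k"] by (metis list_emb_Cons)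
        moreover have "i < e (j - k)" using True e_le[of "j-k"] by (simp add: k_def)
        ultimately show ?thesis using bad_mbs by (auto simp: bad_def)
      next
        case False
        hence "subseq (tl (mbs (e (i - k)))) (tl (mbs (e (j - k))))" using s jk by (simp add: g_def)
        hence "subseq (mbs (e (i - k))) (mbs (e (j - k)))"
          using mbs_e[of "j-k"] mbs_e[of "i-k"] by (metis subseq_Cons2)
        moreover have "e (i - k) < e (j - k)" using e_mono False ij jk by simp
        ultimately show ?thesis using bad_mbs by (auto simp: bad_def)
      qed
    qed
  qed
  hence "length (mbs k) \<le> length (g k)" using minimal[of g k] by (simp add: g_def)
  also have "g k = tl (mbs k)" by (simp add: g_def k_def)
  finally show False using ne[of k] by (cases "mbs k") auto
qed

lemma homog:
  fixes f :: "nat \<Rightarrow> ('m::finite) list"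
  assumes "infinite I"
  shows "\<exists>J\<subseteq>I. infinite J \<and> (\<forall>i\<in>J. \<forall>j\<in>J. i<j \<longrightarrow> subseq (f i) (f j))"
proof -
  define col where "col X = (if subseq (f (Min X)) (f (Max X)) then 0 else (1::nat))" for X
  have "\<forall>x\<in>I. \<forall>y\<in>I. x \<noteq> y \<longrightarrow> col {x, y} < 2" by (simp add: col_def)
  from Ramsey2[OF assms this] obtain Y t where Y: "Y \<subseteq> I" "infinite Y" "t<2"
     "\<forall>x\<in>Y. \<forall>y\<in>Y. x\<noteq>y \<longrightarrow> col {x,y} = t" by blast
  have cij: "col {i, j} = (if subseq (f i) (f j) then 0 else 1)" if "i < j" for i j
    using that by (simp add: col_def min_def max_def)
  show ?thesis
  proof (cases "t = 0")
    case True
    have "\<forall>i\<in>Y. \<forall>j\<in>Y. i<j \<longrightarrow> subseq (f i) (f j)"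
    proof (intro ballI impI)
      fix i j assume "i \<in> Y" "j \<in> Y" "i < j"
      hence "col {i,j} = 0" using Y(4) True by auto
      thus "subseq (f i) (f j)" using cij[OF \<open>i<j\<close>] by (auto split: if_splits)
    qed
    then show ?thesis using Y by blast
  next
    case False
    define e where "e = enumerate Y"
    obtain i j where ij: "i < j" "subseq (f (e i)) (f (e j))" using higman[of "f \<circ> e"] by auto
    have "e i < e j" "e i \<in> Y" "e j \<in> Y" using ij Y(2) enumerate_mono enumerate_in_set by (auto simp: e_def)
    hence "col {e i, e j} = t" using Y(4) by auto
    moreover have "col {e i, e j} = 0" using cij[OF \<open>e i < e j\<close>] ij by simp
    ultimately show ?thesis using False by simp
  qed
qed

lemma homog_fun:
  fixes f :: "nat \<Rightarrow> ('c \<Rightarrow> ('m::finite) list)"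
  assumes "finite C"
  shows "infinite I \<Longrightarrow> \<exists>J\<subseteq>I. infinite J \<and> (\<forall>i\<in>J. \<forall>j\<in>J. i<j \<longrightarrow> (\<forall>c\<in>C. subseq (f i c) (f j c)))"
  using assms
proof (induction C arbitrary: I rule: finite_induct)
  case empty
  then show ?case by blast
next
  case (insert c C)
  then obtain J1 where J1: "J1 \<subseteq> I" "infinite J1" "\<forall>i\<in>J1. \<forall>j\<in>J1. i<j \<longrightarrow> (\<forall>c\<in>C. subseq (f i c) (f j c))"
    by blast
  obtain J2 where J2: "J2 \<subseteq> J1" "infinite J2" "\<forall>i\<in>J2. \<forall>j\<in>J2. i<j \<longrightarrow> subseq (f i c) (f j c)"
    using homog[OF J1(2), of "\<lambda>i. f i c"] by blast
  show ?case using J1 J2 by (rule_tac x=J2 in exI) blast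
qed

lemma af_fun:
  fixes f :: "nat \<Rightarrow> (('c::finite) \<Rightarrow> ('m::finite) list)"
  shows "\<exists>i j. i < j \<and> (\<forall>c. subseq (f i c) (f j c))"
proof -
  obtain J where J: "infinite J" "\<forall>i\<in>J. \<forall>j\<in>J. i<j \<longrightarrow> (\<forall>c\<in>UNIV. subseq (f i c) (f j c))"
    using homog_fun[of UNIV "UNIV::nat set" f] by auto
  have "enumerate J 0 < enumerate J 1" "enumerate J 0 \<in> J" "enumerate J 1 \<in> J"
    using J(1) enumerate_mono enumerate_in_set by auto
  thus ?thesis using J(2) by blast
qed

lemma acc_upclosed:
  fixes U :: "nat \<Rightarrow> (('c::finite) \<Rightarrow> ('m::finite) list) set"
  assumes mono: "\<And>n. U n \<subseteq> U (Suc n)"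
    and up: "\<And>n x y. x \<in> U n \<Longrightarrow> (\<forall>c. subseq (x c) (y c)) \<Longrightarrow> y \<in> U n"
  shows "\<exists>N. \<forall>n\<ge>N. U n = U N"
proof (rule ccontr)
  assume "\<not> ?thesis"
  hence ex: "\<exists>n. n > N \<and> U n \<noteq> U N" for N
    by (metis le_neq_implies_less)
  define nx where "nx N = (SOME n. n > N \<and> U n \<noteq> U N)" for N
  have nx: "nx N > N \<and> U (nx N) \<noteq> U N" for N using someI_ex[OF ex[of N]] by (simp add: nx_def)
  define k where "k i = (nx ^^ i) 0" for i
  have ksuc: "k (Suc i) = nx (k i)" for i by (simp add: k_def)
  have Umono: "m \<le> n \<Longrightarrow> U m \<subseteq> U n" for m n
    using lift_Suc_mono_le[of U, OF mono] by blast
  have "strict_mono k" by (rule strict_monoI_Suc) (simp add: ksuc nx)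
  have exy: "\<exists>y. y \<in> U (k (Suc i)) \<and> y \<notin> U (k i)" for i
    using nx[of "k i"] Umono[of "k i" "nx (k i)"] by (auto simp: ksuc)
  define y where "y i = (SOME y. y \<in> U (k (Suc i)) \<and> y \<notin> U (k i))" for i
  have y: "y i \<in> U (k (Suc i)) \<and> y i \<notin> U (k i)" for i using someI_ex[OF exy[of i]] by (simp add: y_def)
  obtain i j where ij: "i < j" "\<forall>c. subseq (y i c) (y j c)" using af_fun[of y] by blast
  have "k (Suc i) \<le> k j" using \<open>strict_mono k\<close> ij(1) by (simp add: strict_mono_less_eq)
  hence "y i \<in> U (k j)" using y[of i] Umono by blast
  hence "y j \<in> U (k j)" using up ij(2) by blast
  thus False using y[of j] by simp
qed


lemma regular_langI:
  fixes \<delta> :: "'q \<Rightarrow> 'm \<Rightarrow> 'q"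
  assumes fin: "finite Q" and q0: "q0 \<in> Q" and cl: "\<forall>q\<in>Q. \<forall>a. \<delta> q a \<in> Q" and F: "F \<subseteq> Q"
    and A: "A = {w. foldl \<delta> q0 w \<in> F}"
  shows "regular_lang A"
proof -
  obtain \<iota> :: "'q \<Rightarrow> nat" and n where "\<iota> ` Q = {i. i<n}" and inj: "inj_on \<iota> Q"
    using finite_imp_inj_to_nat_seg[OF fin] by blast
  define \<delta>' where "\<delta>' i a = \<iota> (\<delta> (the_inv_into Q \<iota> i) a)" for i a
  have fQ: "q \<in> Q \<Longrightarrow> foldl \<delta> q w \<in> Q" for q w
    by (induction w arbitrary: q) (auto simp: cl)
  have fl: "q \<in> Q \<Longrightarrow> foldl \<delta>' (\<iota> q) w = \<iota> (foldl \<delta> q w)" for q w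
  proof (induction w arbitrary: q)
    case Nil then show ?case by simp
  next
    case (Cons a w)
    have "\<delta>' (\<iota> q) a = \<iota> (\<delta> q a)" using Cons.prems inj by (simp add: \<delta>'_def the_inv_into_f_f)
    then show ?case using Cons cl by simp
  qed
  have "A = {w. foldl \<delta>' (\<iota> q0) w \<in> \<iota> ` F}"
    using A fl[OF q0] fQ[OF q0] inj F by (auto simp: inj_on_image_mem_iff)
  moreover have "\<forall>q\<in>\<iota> ` Q. \<forall>a. \<delta>' q a \<in> \<iota> ` Q"
    using cl inj by (auto simp: \<delta>'_def the_inv_into_f_f)
  ultimately show ?thesis unfolding regular_lang_def
    using fin q0 F by (intro exI[of _ "\<iota> ` Q"] exI[of _ "\<iota> q0"] exI[of _ \<delta>'] exI[of _ "\<iota> ` F"]) auto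
qed

lemma regular_langE:
  assumes "regular_lang A"
  obtains Q :: "nat set" and q0 \<delta> F where "finite Q" "q0 \<in> Q" "\<forall>q\<in>Q. \<forall>a. \<delta> q a \<in> Q" "F \<subseteq> Q"
    "A = {w. foldl \<delta> q0 w \<in> F}"
  using assms unfolding regular_lang_def by blast

lemma foldl_in: "\<forall>q\<in>Q. \<forall>a. \<delta> q a \<in> Q \<Longrightarrow> q \<in> Q \<Longrightarrow> foldl \<delta> q w \<in> Q"
  by (induction w arbitrary: q) auto

lemma rl_compl: "regular_lang A \<Longrightarrow> regular_lang (- A)"
proof -
  assume "regular_lang A"
  then obtain Q :: "nat set" and q0 \<delta> F where Q: "finite Q" "q0 \<in> Q" "\<forall>q\<in>Q. \<forall>a. \<delta> q a \<in> Q" "F \<subseteq> Q"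
    "A = {w. foldl \<delta> q0 w \<in> F}" by (rule regular_langE)
  show ?thesis
    by (rule regular_langI[of Q q0 \<delta> "Q - F"]) (use Q foldl_in[of Q \<delta> q0] in auto)
qed

lemma rl_inter: "regular_lang A \<Longrightarrow> regular_lang B \<Longrightarrow> regular_lang (A \<inter> B)"
proof -
  assume "regular_lang A" "regular_lang B"
  from \<open>regular_lang A\<close> obtain Q :: "nat set" and q0 \<delta> F where Q: "finite Q" "q0 \<in> Q" "\<forall>q\<in>Q. \<forall>a. \<delta> q a \<in> Q" "F \<subseteq> Q"
    "A = {w. foldl \<delta> q0 w \<in> F}" by (rule regular_langE)
  obtain Q' :: "nat set" and q0' \<delta>' F' where Q': "finite Q'" "q0' \<in> Q'" "\<forall>q\<in>Q'. \<forall>a. \<delta>' q a \<in> Q'" "F' \<subseteq> Q'"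
    "B = {w. foldl \<delta>' q0' w \<in> F'}" using \<open>regular_lang B\<close> by (rule regular_langE)
  define d where "d pq a = (\<delta> (fst pq) a, \<delta>' (snd pq) a)" for pq a
  have fl: "foldl d (p, q) w = (foldl \<delta> p w, foldl \<delta>' q w)" for p q w
    by (induction w arbitrary: p q) (auto simp: d_def)
  show ?thesis
    by (rule regular_langI[of "Q \<times> Q'" "(q0, q0')" d "F \<times> F'"]) (use Q Q' in \<open>auto simp: fl d_def\<close>)
qed

lemma rl_UNIV: "regular_lang UNIV"
  by (rule regular_langI[of "{()}" "()" "\<lambda>_ _. ()" "{()}"]) auto

lemma rl_snoc: "regular_lang A \<Longrightarrow> regular_lang {w. w @ [m] \<in> A}"
proof -
  assume "regular_lang A"
  then obtain Q :: "nat set" and q0 \<delta> F where Q: "finite Q" "q0 \<in> Q" "\<forall>q\<in>Q. \<forall>a. \<delta> q a \<in> Q" "F \<subseteq> Q"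
    "A = {w. foldl \<delta> q0 w \<in> F}" by (rule regular_langE)
  show ?thesis
    by (rule regular_langI[of Q q0 \<delta> "{q\<in>Q. \<delta> q m \<in> F}"]) (use Q foldl_in[of Q \<delta> q0] in auto)
qed

lemma rl_cons: "regular_lang A \<Longrightarrow> regular_lang {v. \<exists>w. v = m # w \<and> w \<in> A}"
proof -
  assume "regular_lang A"
  then obtain Q :: "nat set" and q0 \<delta> F where Q: "finite Q" "q0 \<in> Q" "\<forall>q\<in>Q. \<forall>a. \<delta> q a \<in> Q" "F \<subseteq> Q"
    "A = {w. foldl \<delta> q0 w \<in> F}" by (rule regular_langE)
  define d where "d s a = (case s of None \<Rightarrow> (if a = m then Some (Some q0) else Some None)
     | Some None \<Rightarrow> Some None | Some (Some q) \<Rightarrow> Some (Some (\<delta> q a)))" for s a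
  have f1: "foldl d (Some (Some q)) w = Some (Some (foldl \<delta> q w))" for q w
    by (induction w arbitrary: q) (auto simp: d_def)
  have f2: "foldl d (Some None) w = Some None" for w
    by (induction w) (auto simp: d_def)
  have eq: "{v. \<exists>w. v = m # w \<and> w \<in> A} = {v. foldl d None v \<in> Some ` Some ` F}"
  proof (rule set_eqI)
    fix v show "v \<in> {v. \<exists>w. v = m # w \<and> w \<in> A} \<longleftrightarrow> v \<in> {v. foldl d None v \<in> Some ` Some ` F}"
      by (cases v) (auto simp: d_def f1 f2 Q(5))
  qed
  show ?thesis
    by (rule regular_langI[of "{None, Some None} \<union> Some ` Some ` Q" None d "Some ` Some ` F"])
       (use Q eq in \<open>auto simp: d_def split: option.splits\<close>)
qed

lemma rl_up: "regular_lang A \<Longrightarrow> regular_lang {w. \<exists>v\<in>A. subseq v w}"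
proof -
  assume "regular_lang A"
  then obtain Q :: "nat set" and q0 \<delta> F where Q: "finite Q" "q0 \<in> Q" "\<forall>q\<in>Q. \<forall>a. \<delta> q a \<in> Q" "F \<subseteq> Q"
    "A = {w. foldl \<delta> q0 w \<in> F}" by (rule regular_langE)
  define d where "d S a = S \<union> (\<lambda>q. \<delta> q a) ` S" for S a
  have fl: "foldl d S w = {foldl \<delta> q v | q v. q \<in> S \<and> subseq v w}" for S w
  proof (induction w arbitrary: S)
    case Nil
    then show ?case by (auto dest: list_emb_Nil2) (metis foldl_Nil list_emb_Nil)
  next
    case (Cons a w)
    have "foldl d S (a # w) = {foldl \<delta> q v | q v. q \<in> d S a \<and> subseq v w}" using Cons by simp
    also have "\<dots> = {foldl \<delta> q v | q v. q \<in> S \<and> subseq v (a # w)}"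
    proof (rule set_eqI, rule iffI)
      fix z assume "z \<in> {foldl \<delta> q v | q v. q \<in> d S a \<and> subseq v w}"
      then obtain q v where z: "z = foldl \<delta> q v" "q \<in> d S a" "subseq v w" by blast
      show "z \<in> {foldl \<delta> q v | q v. q \<in> S \<and> subseq v (a # w)}"
      proof (cases "q \<in> S")
        case True then show ?thesis using z by (auto intro: list_emb_Cons)
      next
        case False
        then obtain q' where "q' \<in> S" "q = \<delta> q' a" using z(2) by (auto simp: d_def)
        hence "z = foldl \<delta> q' (a # v)" "subseq (a # v) (a # w)" using z by auto
        then show ?thesis using \<open>q' \<in> S\<close> by blast
      qed
    next
      fix z assume "z \<in> {foldl \<delta> q v | q v. q \<in> S \<and> subseq v (a # w)}"
      then obtain q v where z: "z = foldl \<delta> q v" "q \<in> S" "subseq v (a # w)" by blast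
      show "z \<in> {foldl \<delta> q v | q v. q \<in> d S a \<and> subseq v w}"
      proof (cases v)
        case Nil
        hence "z = foldl \<delta> q []" using z by simp
        moreover have "q \<in> d S a" using z(2) by (simp add: d_def)
        moreover have "subseq [] w" by simp
        ultimately show ?thesis by blast
      next
        case (Cons b v')
        show ?thesis
        proof (cases "b = a")
          case True
          hence "subseq v' w" using z Cons by simp
          moreover have "\<delta> q a \<in> d S a" using z by (auto simp: d_def)
          ultimately show ?thesis using z Cons True by auto
        next
          case False
          hence "subseq v w" using z Cons by (simp add: subseq_Cons2_iff)
          then show ?thesis using z by (auto simp: d_def)
        qed
      qed
    qed
    finally show ?case .
  qed
  have eq: "{w. \<exists>v\<in>A. subseq v w} = {w. foldl d {q0} w \<in> {S. S \<inter> F \<noteq> {}}}"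
    by (auto simp: fl Q(5))
  have cl: "S \<subseteq> Q \<Longrightarrow> d S a \<subseteq> Q" for S a using Q(3) by (auto simp: d_def)
  show ?thesis
    by (rule regular_langI[of "Pow Q" "{q0}" d "{S\<in>Pow Q. S \<inter> F \<noteq> {}}"])
       (use Q cl eq foldl_in[of "Pow Q" d "{q0}"] in auto)
qed

definition prodset :: "('c \<Rightarrow> 'm list set) \<Rightarrow> ('c \<Rightarrow> 'm list) set" where
  "prodset Lc = {x. \<forall>c. x c \<in> Lc c}"

lemma rc_prod: "(\<And>c. regular_lang (Lc c)) \<Longrightarrow> regular_contents (prodset Lc)"
  unfolding regular_contents_def prodset_def by (rule exI[of _ "{Lc}"]) auto

lemma rc_empty: "regular_contents {}"
  unfolding regular_contents_def by (rule exI[of _ "{}"]) auto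

lemma rc_UNIV: "regular_contents UNIV"
  using rc_prod[of "\<lambda>_. UNIV"] rl_UNIV by (simp add: prodset_def)

lemma rc_union: "regular_contents A \<Longrightarrow> regular_contents B \<Longrightarrow> regular_contents (A \<union> B)"
  unfolding regular_contents_def
proof (elim exE conjE)
  fix Ls1 Ls2 :: "('a \<Rightarrow> 'b list set) set"
  assume "finite Ls1" "\<forall>Lc\<in>Ls1. \<forall>c. regular_lang (Lc c)" "A = (\<Union>Lc\<in>Ls1. {x. \<forall>c. x c \<in> Lc c})"
    "finite Ls2" "\<forall>Lc\<in>Ls2. \<forall>c. regular_lang (Lc c)" "B = (\<Union>Lc\<in>Ls2. {x. \<forall>c. x c \<in> Lc c})"
  thus "\<exists>Ls. finite Ls \<and> (\<forall>Lc\<in>Ls. \<forall>c. regular_lang (Lc c)) \<and> A \<union> B = (\<Union>Lc\<in>Ls. {x. \<forall>c. x c \<in> Lc c})"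
    by (intro exI[of _ "Ls1 \<union> Ls2"]) auto
qed

lemma rc_cases:
  assumes "regular_contents X"
  obtains Ls where "finite Ls" "\<forall>Lc\<in>Ls. \<forall>c. regular_lang (Lc c)" "X = (\<Union>Lc\<in>Ls. prodset Lc)"
  using assms unfolding regular_contents_def prodset_def by blast

lemma rc_Union_fin: "finite I \<Longrightarrow> (\<And>i. i \<in> I \<Longrightarrow> regular_contents (X i)) \<Longrightarrow> regular_contents (\<Union>i\<in>I. X i)"
  by (induction I rule: finite_induct) (auto intro: rc_union rc_empty)

lemma rc_inter: "regular_contents A \<Longrightarrow> regular_contents B \<Longrightarrow> regular_contents (A \<inter> B)"
proof -
  assume "regular_contents A" "regular_contents B"
  then obtain Ls1 Ls2 where L1: "finite Ls1" "\<forall>Lc\<in>Ls1. \<forall>c. regular_lang (Lc c)" "A = (\<Union>Lc\<in>Ls1. prodset Lc)"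
    and L2: "finite Ls2" "\<forall>Lc\<in>Ls2. \<forall>c. regular_lang (Lc c)" "B = (\<Union>Lc\<in>Ls2. prodset Lc)"
    by (metis rc_cases)
  have "A \<inter> B = (\<Union>p\<in>Ls1 \<times> Ls2. prodset (\<lambda>c. fst p c \<inter> snd p c))"
    using L1(3) L2(3) by (auto simp: prodset_def)
  moreover have "regular_contents (prodset (\<lambda>c. fst p c \<inter> snd p c))" if "p \<in> Ls1 \<times> Ls2" for p
    using that L1(2) L2(2) by (intro rc_prod rl_inter) auto
  ultimately show ?thesis using L1(1) L2(1) by (auto intro: rc_Union_fin)
qed

lemma rc_Inter_fin: "finite I \<Longrightarrow> (\<And>i. i \<in> I \<Longrightarrow> regular_contents (X i)) \<Longrightarrow> regular_contents (\<Inter>i\<in>I. X i)"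
  by (induction I rule: finite_induct) (auto intro: rc_inter rc_UNIV)

lemma rc_compl:
  fixes X :: "('c::finite \<Rightarrow> 'm list) set"
  shows "regular_contents X \<Longrightarrow> regular_contents (- X)"
proof -
  assume "regular_contents X"
  then obtain Ls where L: "finite Ls" "\<forall>Lc\<in>Ls. \<forall>c. regular_lang (Lc c)" "X = (\<Union>Lc\<in>Ls. prodset Lc)"
    by (metis rc_cases)
  have "- X = (\<Inter>Lc\<in>Ls. \<Union>c\<in>UNIV. prodset (\<lambda>d. if d = c then - Lc c else UNIV))"
    using L(3) by (auto simp: prodset_def)
  moreover have "regular_contents (\<Union>c\<in>UNIV. prodset (\<lambda>d. if d = c then - Lc c else UNIV))" if "Lc \<in> Ls" for Lc
    using that L(2) by (intro rc_Union_fin rc_prod) (auto intro: rl_compl rl_UNIV)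
  ultimately show ?thesis using L(1) by (auto intro: rc_Inter_fin)
qed

lemma rc_diff:
  fixes A :: "('c::finite \<Rightarrow> 'm list) set"
  shows "regular_contents A \<Longrightarrow> regular_contents B \<Longrightarrow> regular_contents (A - B)"
  using rc_inter[OF _ rc_compl, of A B] by (simp add: Diff_eq)

definition upc :: "('c \<Rightarrow> 'm list) set \<Rightarrow> ('c \<Rightarrow> 'm list) set" where
  "upc X = {y. \<exists>x\<in>X. \<forall>c. subseq (x c) (y c)}"

lemma rc_upc: "regular_contents X \<Longrightarrow> regular_contents (upc X)"
proof -
  assume "regular_contents X"
  then obtain Ls where L: "finite Ls" "\<forall>Lc\<in>Ls. \<forall>c. regular_lang (Lc c)" "X = (\<Union>Lc\<in>Ls. prodset Lc)"
    by (metis rc_cases)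
  have eq: "upc (prodset Lc) = prodset (\<lambda>c. {w. \<exists>v\<in>Lc c. subseq v w})" for Lc
  proof (rule set_eqI, rule iffI)
    fix y assume "y \<in> upc (prodset Lc)" thus "y \<in> prodset (\<lambda>c. {w. \<exists>v\<in>Lc c. subseq v w})"
      by (auto simp: upc_def prodset_def)
  next
    fix y assume "y \<in> prodset (\<lambda>c. {w. \<exists>v\<in>Lc c. subseq v w})"
    hence "\<forall>c. \<exists>v. v \<in> Lc c \<and> subseq v (y c)" by (auto simp: prodset_def)
    then obtain x where "\<forall>c. x c \<in> Lc c \<and> subseq (x c) (y c)" by metis
    thus "y \<in> upc (prodset Lc)" by (auto simp: upc_def prodset_def)
  qed
  have "upc X = (\<Union>Lc\<in>Ls. upc (prodset Lc))" using L(3) by (auto simp: upc_def)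
  thus ?thesis unfolding eq using L(1,2) by (auto intro!: rc_Union_fin rc_prod rl_up)
qed

definition opre :: "('c, 'm) lcs_op \<Rightarrow> ('c \<Rightarrow> 'm list) set \<Rightarrow> ('c \<Rightarrow> 'm list) set" where
  "opre op X = {x. \<exists>x'. op_rel op x x' \<and> x' \<in> X}"

lemma rc_opre: "regular_contents X \<Longrightarrow> regular_contents (opre op X)"
proof -
  assume "regular_contents X"
  then obtain Ls where L: "finite Ls" "\<forall>Lc\<in>Ls. \<forall>c. regular_lang (Lc c)" "X = (\<Union>Lc\<in>Ls. prodset Lc)"
    by (metis rc_cases)
  have "opre op X = (\<Union>Lc\<in>Ls. opre op (prodset Lc))" using L(3) by (auto simp: opre_def)
  moreover have "regular_contents (opre op (prodset Lc))" if "Lc \<in> Ls" for Lc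
  proof (cases op)
    case (Send c m)
    have "opre op (prodset Lc) = prodset (Lc(c := {w. w @ [m] \<in> Lc c}))"
      by (auto simp: opre_def prodset_def Send)
    then show ?thesis using that L(2) by (auto intro!: rc_prod rl_snoc)
  next
    case (Recv c m)
    have "opre op (prodset Lc) = prodset (Lc(c := {v. \<exists>w. v = m # w \<and> w \<in> Lc c}))"
    proof (rule set_eqI, rule iffI)
      fix x assume "x \<in> opre op (prodset Lc)"
      then obtain w where w: "x c = m # w" "\<forall>d. (x(c := w)) d \<in> Lc d"
        by (auto simp: opre_def prodset_def Recv)
      have "x d \<in> (Lc(c := {v. \<exists>w. v = m # w \<and> w \<in> Lc c})) d" for d
        using w spec[OF w(2), of d] by (cases "d = c") auto
      thus "x \<in> prodset (Lc(c := {v. \<exists>w. v = m # w \<and> w \<in> Lc c}))"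
        by (simp add: prodset_def)
    next
      fix x assume "x \<in> prodset (Lc(c := {v. \<exists>w. v = m # w \<and> w \<in> Lc c}))"
      hence h: "x d \<in> (Lc(c := {v. \<exists>w. v = m # w \<and> w \<in> Lc c})) d" for d
        by (simp add: prodset_def)
      have "\<exists>w. x c = m # w \<and> w \<in> Lc c" using h[of c] by simp
      moreover have "\<forall>d. d \<noteq> c \<longrightarrow> x d \<in> Lc d"
      proof (intro allI impI)
        fix d assume "d \<noteq> c" thus "x d \<in> Lc d" using h[of d] by simp
      qed
      ultimately obtain w where w: "x c = m # w" "w \<in> Lc c" "\<forall>d. d \<noteq> c \<longrightarrow> x d \<in> Lc d" by blast
      have "op_rel op x (x(c := w))" using w by (simp add: Recv)
      moreover have "x(c := w) \<in> prodset Lc" using w by (simp add: prodset_def)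
      ultimately show "x \<in> opre op (prodset Lc)" by (auto simp: opre_def)
    qed
    then show ?thesis using that L(2) by (auto intro!: rc_prod rl_cons)
  next
    case Nop
    then show ?thesis using that L(2) by (auto simp: opre_def intro!: rc_prod)
  qed
  ultimately show ?thesis using L(1) by (auto intro: rc_Union_fin)
qed


definition sec :: "('s,'c,'m) conf set \<Rightarrow> 's \<Rightarrow> bool \<Rightarrow> ('c \<Rightarrow> 'm list) set" where
  "sec R s b = {w. (s, w, b) \<in> R}"

lemma regular_confs_sec: "regular_confs R \<longleftrightarrow> (\<forall>s b. regular_contents (sec R s b))"
  by (simp add: regular_confs_def sec_def)

lemma rc_if: "regular_contents (if P then UNIV else {})"
  by (simp add: rc_UNIV rc_empty)

lemma rcf_union: "regular_confs A \<Longrightarrow> regular_confs B \<Longrightarrow> regular_confs (A \<union> B)"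
  unfolding regular_confs_sec by (auto simp: sec_def Collect_disj_eq intro: rc_union)

lemma rcf_inter: "regular_confs A \<Longrightarrow> regular_confs B \<Longrightarrow> regular_confs (A \<inter> B)"
  unfolding regular_confs_sec by (auto simp: sec_def Collect_conj_eq intro: rc_inter)

lemma rcf_diff:
  fixes A :: "('s, 'c::finite, 'm) conf set"
  shows "regular_confs A \<Longrightarrow> regular_confs B \<Longrightarrow> regular_confs (A - B)"
proof -
  assume "regular_confs A" "regular_confs B"
  moreover have "sec (A - B) s b = sec A s b - sec B s b" for s b by (auto simp: sec_def)
  ultimately show ?thesis unfolding regular_confs_sec by (auto intro: rc_diff)
qed

locale game =
  fixes L :: "('s, 'c::finite, 'm::finite) sglcs" and x :: nat and T :: "('s,'c,'m) conf set"
  assumes wf: "wf_sglcs L" and x01: "x \<in> {0,1}" and Tc: "T \<subseteq> confs L" and Treg: "regular_confs T"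
begin

lemma wf_parts: "finite (states L)" "states0 L \<inter> states1 L = {}" "states0 L \<union> states1 L = states L"
  "finite (trans L)" "trans L \<subseteq> states L \<times> UNIV \<times> states L" "0 < lam L" "lam L < 1"
  using wf by (auto simp: wf_sglcs_def)

definition Fop where "Fop R = T \<union> R \<union> (rstates L \<inter> Pre L R) \<union> (pstates L x \<inter> Pre L R)
                          \<union> (pstates L (1 - x) \<inter> tPre L R)"

lemma Force_eq: "Force L x T = lfp Fop"
  by (simp add: Force_def Fop_def[abs_def])

lemma Pre_mono: "A \<subseteq> B \<Longrightarrow> Pre L A \<subseteq> Pre L B" by (auto simp: Pre_def)
lemma tPre_mono: "A \<subseteq> B \<Longrightarrow> tPre L A \<subseteq> tPre L B" by (auto simp: tPre_def Pre_def)

lemma mono_Fop: "mono Fop"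
proof (rule monoI)
  fix A B :: "('s,'c,'m) conf set" assume "A \<subseteq> B"
  thus "Fop A \<subseteq> Fop B" unfolding Fop_def using Pre_mono[of A B] tPre_mono[of A B] by blast
qed

definition RR where "RR k = (Fop ^^ k) {}"
lemma RR_Suc: "RR (Suc k) = Fop (RR k)" by (simp add: RR_def)
lemma RR_0: "RR 0 = {}" by (simp add: RR_def)
lemma RR_step: "RR k \<subseteq> RR (Suc k)" by (auto simp: RR_Suc Fop_def)
lemma RR_mono: "j \<le> k \<Longrightarrow> RR j \<subseteq> RR k"
  using lift_Suc_mono_le[of RR, OF RR_step] by blast

lemma Force_fix: "Fop (Force L x T) = Force L x T"
  unfolding Force_eq using lfp_fixpoint[OF mono_Fop] .

lemma RR_Force: "RR k \<subseteq> Force L x T"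
proof (induction k)
  case 0 then show ?case by (simp add: RR_0)
next
  case (Suc k)
  then show ?case using mono_Fop Force_fix unfolding RR_Suc by (metis monoD)
qed

lemma T_Force: "T \<subseteq> Force L x T"
  using Force_fix unfolding Fop_def by blast

lemma edge_confs: "edge L c c' \<Longrightarrow> c \<in> confs L \<and> c' \<in> confs L"
  using wf_parts(5) unfolding edge_def confs_def by auto

lemma Pre_alt: "Pre L R = {c. \<exists>c'\<in>R. edge L c c'}"
  by (auto simp: Pre_def dest: edge_confs)

lemma edge_rand: "edge L (s,w,False) c' \<longleftrightarrow> s \<in> states L \<and> (\<exists>w'. c' = (s,w',True) \<and> (\<forall>ch. subseq (w' ch) (w ch)))"
  by (auto simp: edge_def)

lemma edge_play: "edge L (s,w,True) c' \<longleftrightarrow> s \<in> states L \<and>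
   ((\<exists>op s' w'. (s,op,s') \<in> trans L \<and> op_rel op w w' \<and> c' = (s',w',False)) \<or>
    ((\<nexists>op t v. (s,op,t) \<in> trans L \<and> op_rel op w v) \<and> c' = (s,w,False)))"
  unfolding edge_def by blast

lemma edge_play_False: "edge L (s,w,True) c' \<Longrightarrow> \<exists>s' w'. c' = (s',w',False)"
  by (auto simp: edge_def)

lemma confs_cases: "c \<in> confs L \<Longrightarrow> (\<exists>s w. c = (s,w,False) \<and> s \<in> states L) \<or>
   (\<exists>s w. c = (s,w,True) \<and> s \<in> ctrl L x) \<or> (\<exists>s w. c = (s,w,True) \<and> s \<in> ctrl L (1-x))"
  using x01 wf_parts(3) by (cases c) (auto simp: confs_def ctrl_def)

lemma ctrl_disj: "s \<in> ctrl L x \<Longrightarrow> s \<in> ctrl L (1-x) \<Longrightarrow> False"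
  using x01 wf_parts(2) by (auto simp: ctrl_def)

lemma ctrl_states: "s \<in> ctrl L y \<Longrightarrow> s \<in> states L"
  using wf_parts(3) by (auto simp: ctrl_def split: if_splits)

definition DL where "DL s = (\<Inter>t\<in>{t\<in>trans L. fst t = s}. - opre (fst (snd t)) UNIV)"

lemma sec_Pre_False: "sec (Pre L R) s False = (if s \<in> states L then upc (sec R s True) else {})"
  by (auto simp: sec_def Pre_alt edge_rand upc_def)

lemma sec_Pre_True: "sec (Pre L R) s True = (if s \<in> states L then
   (\<Union>t\<in>{t\<in>trans L. fst t = s}. opre (fst (snd t)) (sec R (snd (snd t)) False)) \<union> (DL s \<inter> sec R s False) else {})"
proof (cases "s \<in> states L")
  case False
  then show ?thesis by (auto simp: sec_def Pre_alt edge_play)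
next
  case True
  show ?thesis
  proof (rule set_eqI, rule iffI)
    fix w assume "w \<in> sec (Pre L R) s True"
    then obtain c' where c': "c' \<in> R" "edge L (s,w,True) c'" by (auto simp: sec_def Pre_alt)
    from c'(2) have "(\<exists>op s' w'. (s,op,s') \<in> trans L \<and> op_rel op w w' \<and> c' = (s',w',False)) \<or>
       ((\<nexists>op t v. (s,op,t) \<in> trans L \<and> op_rel op w v) \<and> c' = (s,w,False))"
      by (simp add: edge_play)
    thus "w \<in> (if s \<in> states L then
      (\<Union>t\<in>{t\<in>trans L. fst t = s}. opre (fst (snd t)) (sec R (snd (snd t)) False)) \<union> (DL s \<inter> sec R s False) else {})"
    proof
      assume "\<exists>op s' w'. (s,op,s') \<in> trans L \<and> op_rel op w w' \<and> c' = (s',w',False)"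
      then obtain op s' w' where "(s,op,s') \<in> trans L" "op_rel op w w'" "c' = (s',w',False)" by blast
      hence "w \<in> opre (fst (snd (s,op,s'))) (sec R (snd (snd (s,op,s'))) False)"
        using c'(1) by (auto simp: opre_def sec_def)
      thus ?thesis using True \<open>(s,op,s') \<in> trans L\<close> by force
    next
      assume a: "(\<nexists>op t v. (s,op,t) \<in> trans L \<and> op_rel op w v) \<and> c' = (s,w,False)"
      hence "w \<in> DL s" by (auto simp: DL_def opre_def)
      moreover have "w \<in> sec R s False" using a c'(1) by (simp add: sec_def)
      ultimately show ?thesis using True by simp
    qed
  next
    fix w assume "w \<in> (if s \<in> states L then
      (\<Union>t\<in>{t\<in>trans L. fst t = s}. opre (fst (snd t)) (sec R (snd (snd t)) False)) \<union> (DL s \<inter> sec R s False) else {})"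
    hence "(\<exists>t\<in>trans L. fst t = s \<and> w \<in> opre (fst (snd t)) (sec R (snd (snd t)) False)) \<or> (w \<in> DL s \<and> w \<in> sec R s False)"
      using True by (simp only: if_True Un_iff Int_iff UN_iff mem_Collect_eq) blast
    thus "w \<in> sec (Pre L R) s True"
    proof
      assume "\<exists>t\<in>trans L. fst t = s \<and> w \<in> opre (fst (snd t)) (sec R (snd (snd t)) False)"
      then obtain op s' w' where "(s,op,s') \<in> trans L" "op_rel op w w'" "(s',w',False) \<in> R"
        by (auto simp: opre_def sec_def)
      hence "edge L (s,w,True) (s',w',False)" using True by (auto simp: edge_play)
      thus ?thesis using \<open>(s',w',False) \<in> R\<close> by (auto simp: sec_def Pre_alt)
    next
      assume a: "w \<in> DL s \<and> w \<in> sec R s False"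
      hence "\<nexists>op t v. (s,op,t) \<in> trans L \<and> op_rel op w v" by (force simp: DL_def opre_def)
      hence "edge L (s,w,True) (s,w,False)" using True by (auto simp: edge_play)
      thus ?thesis using a by (auto simp: sec_def Pre_alt)
    qed
  qed
qed

lemma sec_confs: "sec (confs L) s b = (if s \<in> states L then UNIV else {})"
  by (auto simp: sec_def confs_def)

lemma rcf_confs: "regular_confs (confs L)"
  unfolding regular_confs_sec sec_confs by (simp add: rc_if)

lemma rcf_rstates: "regular_confs (rstates L)"
proof -
  have "sec (rstates L) s b = (if s \<in> states L \<and> \<not> b then UNIV else {})" for s b
    by (auto simp: sec_def rstates_def)
  thus ?thesis unfolding regular_confs_sec by (simp add: rc_if)
qed

lemma rcf_pstates: "regular_confs (pstates L y)"
proof -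
  have "sec (pstates L y) s b = (if s \<in> ctrl L y \<and> b then UNIV else {})" for s b
    by (auto simp: sec_def pstates_def)
  thus ?thesis unfolding regular_confs_sec by (simp add: rc_if)
qed

lemma rcf_Pre: "regular_confs R \<Longrightarrow> regular_confs (Pre L R)"
proof -
  assume R: "regular_confs R"
  have fin: "finite {t\<in>trans L. fst t = s}" for s using wf_parts(4) by simp
  have "regular_contents (DL s)" for s
    unfolding DL_def using fin by (intro rc_Inter_fin rc_compl rc_opre rc_UNIV) auto
  have t: "regular_contents (sec (Pre L R) s True)" for s
    unfolding sec_Pre_True using R fin \<open>\<And>s. regular_contents (DL s)\<close>
    by (auto intro!: rc_union rc_Union_fin rc_opre rc_inter rc_empty simp: regular_confs_sec)
  have f: "regular_contents (sec (Pre L R) s False)" for s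
    unfolding sec_Pre_False using R
    by (auto intro!: rc_upc rc_empty simp: regular_confs_sec)
  have "regular_contents (sec (Pre L R) s b)" for s b using t f by (cases b) auto
  thus ?thesis by (simp add: regular_confs_sec)
qed

lemma rcf_tPre: "regular_confs R \<Longrightarrow> regular_confs (tPre L R)"
  unfolding tPre_def by (intro rcf_diff rcf_confs rcf_Pre) (auto intro: rcf_diff rcf_confs)

lemma rcf_Fop: "regular_confs R \<Longrightarrow> regular_confs (Fop R)"
  unfolding Fop_def
  by (intro rcf_union rcf_inter Treg rcf_rstates rcf_pstates rcf_Pre rcf_tPre)

lemma rcf_RR: "regular_confs (RR k)"
proof (induction k)
  case 0
  have "regular_confs ({} :: ('s,'c,'m) conf set)" by (simp add: regular_confs_def rc_empty)
  then show ?case by (simp add: RR_0)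
next
  case (Suc k)
  then show ?case by (simp add: RR_Suc rcf_Fop)
qed

definition U where "U k s = upc (sec (RR k) s True)"

lemma U_stable: "\<exists>N. \<forall>s\<in>states L. \<forall>n\<ge>N. U n s = U N s"
proof -
  have "\<exists>N. \<forall>n\<ge>N. U n s = U N s" for s
  proof (rule acc_upclosed)
    fix n show "U n s \<subseteq> U (Suc n) s"
      using RR_step[of n] by (auto simp: U_def upc_def sec_def)
  next
    fix n w w' assume "w \<in> U n s" "\<forall>c. subseq (w c) (w' c)"
    thus "w' \<in> U n s" by (auto simp: U_def upc_def intro: subseq_order.order_trans)
  qed
  then obtain Nf where Nf: "\<forall>s. \<forall>n\<ge>Nf s. U n s = U (Nf s) s" by metis
  define N where "N = Max (Nf ` states L)"
  have "Nf s \<le> N" if "s \<in> states L" for s using that wf_parts(1) by (simp add: N_def)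
  hence "\<forall>s\<in>states L. \<forall>n\<ge>N. U n s = U N s" using Nf by (metis order_trans)
  thus ?thesis by blast
qed

lemma RR_confs: "RR k \<subseteq> confs L"
proof (induction k)
  case 0 then show ?case by (simp add: RR_0)
next
  case (Suc k)
  then show ?case using Tc by (auto simp: RR_Suc Fop_def Pre_def tPre_def)
qed

lemma Force_finite: "\<exists>M. Force L x T = RR M"
proof -
  obtain N where N: "\<forall>s\<in>states L. \<forall>n\<ge>N. U n s = U N s" using U_stable by blast
  have randPre: "(s,w,False) \<in> Pre L (RR n) \<Longrightarrow> n \<ge> N \<Longrightarrow> (s,w,False) \<in> RR (Suc N)" for s w n
  proof -
    assume a: "(s,w,False) \<in> Pre L (RR n)" "n \<ge> N"
    hence s: "s \<in> states L" unfolding Pre_def confs_def by blast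
    hence "w \<in> U n s" using a sec_Pre_False[of "RR n" s] by (auto simp: sec_def U_def)
    moreover have "U n s = U N s" using N s a(2) by blast
    ultimately have "w \<in> U N s" by simp
    hence "(s,w,False) \<in> Pre L (RR N)" using sec_Pre_False[of "RR N" s] s by (auto simp: sec_def U_def)
    moreover have "(s,w,False) \<in> rstates L" using s by (simp add: rstates_def)
    ultimately show ?thesis by (simp add: RR_Suc Fop_def)
  qed
  have T1: "T \<subseteq> RR (Suc n)" for n by (auto simp: RR_Suc Fop_def)
  have rand: "(s,w,False) \<in> RR (Suc (Suc N)) \<Longrightarrow> (s,w,False) \<in> RR (Suc N)" for s w
  proof -
    assume "(s,w,False) \<in> RR (Suc (Suc N))"
    moreover have "(s,w,False) \<notin> pstates L y" for y by (simp add: pstates_def)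
    ultimately have "(s,w,False) \<in> T \<or> (s,w,False) \<in> RR (Suc N) \<or> (s,w,False) \<in> Pre L (RR (Suc N))"
      unfolding RR_Suc[of "Suc N"] Fop_def by blast
    thus ?thesis using T1 randPre[of s w "Suc N"] by auto
  qed
  have "RR (Suc (Suc (Suc N))) \<subseteq> RR (Suc (Suc N))"
  proof
    fix c assume "c \<in> RR (Suc (Suc (Suc N)))"
    hence c: "c \<in> Fop (RR (Suc (Suc N)))" by (simp add: RR_Suc)
    show "c \<in> RR (Suc (Suc N))"
    proof -
      { assume "c \<in> T" hence ?thesis using T1 by blast }
      moreover
      { assume "c \<in> rstates L \<inter> Pre L (RR (Suc (Suc N)))"
        then obtain s w where "c = (s,w,False)" "(s,w,False) \<in> Pre L (RR (Suc (Suc N)))"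
          by (auto simp: rstates_def)
        hence ?thesis using randPre[of s w "Suc (Suc N)"] RR_step[of "Suc N"] by auto }
      moreover
      { assume a: "c \<in> pstates L x \<inter> Pre L (RR (Suc (Suc N)))"
        then obtain s w where cw: "c = (s,w,True)" by (auto simp: pstates_def)
        from a obtain c' where c': "c' \<in> RR (Suc (Suc N))" "edge L c c'" by (auto simp: Pre_def)
        then obtain s' w' where "c' = (s',w',False)" using cw edge_play_False by blast
        hence "c' \<in> RR (Suc N)" using rand c' by simp
        hence "c \<in> pstates L x \<inter> Pre L (RR (Suc N))" using a c' by (auto simp: Pre_def)
        hence ?thesis by (simp add: RR_Suc[of "Suc N"] Fop_def) }
      moreover
      { assume a: "c \<in> pstates L (1-x) \<inter> tPre L (RR (Suc (Suc N)))"
        then obtain s w where cw: "c = (s,w,True)" by (auto simp: pstates_def)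
        have "c \<in> tPre L (RR (Suc N))"
        proof -
          have "c \<in> confs L" using a by (simp add: tPre_def)
          moreover have "c \<notin> Pre L (confs L - RR (Suc N))"
          proof
            assume "c \<in> Pre L (confs L - RR (Suc N))"
            then obtain c'' where c'': "c'' \<in> confs L" "c'' \<notin> RR (Suc N)" "edge L c c''" by (auto simp: Pre_def)
            then obtain s' w' where c''eq: "c'' = (s',w',False)" using cw edge_play_False by blast
            have "c \<notin> Pre L (confs L - RR (Suc (Suc N)))" using a by (simp add: tPre_def)
            hence "c'' \<in> RR (Suc (Suc N))"
              using c'' \<open>c \<in> confs L\<close> unfolding Pre_def by blast
            thus False using rand c'' c''eq by simp
          qed
          ultimately show ?thesis by (simp add: tPre_def)
        qed
        hence ?thesis using a by (simp add: RR_Suc[of "Suc N"] Fop_def) }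
      ultimately show ?thesis using c unfolding Fop_def by blast
    qed
  qed
  hence "Fop (RR (Suc (Suc N))) \<subseteq> RR (Suc (Suc N))" by (simp add: RR_Suc)
  hence "Force L x T \<subseteq> RR (Suc (Suc N))" unfolding Force_eq by (rule lfp_lowerbound)
  thus ?thesis using RR_Force by blast
qed

lemma Force_confs: "Force L x T \<subseteq> confs L"
  using Force_finite RR_confs by metis

end


definition mk_rule :: "('s \<times> ('c,'m) lcs_op \<times> 's) list \<Rightarrow> (nat \<Rightarrow> ('c \<Rightarrow> 'm list) set) \<Rightarrow> nat \<Rightarrow> ('s,'c,'m) rule" where
  "mk_rule ts Gd i = (fst (ts!i), Gd i - (\<Union>i'\<in>{i'. i' < i \<and> fst (ts!i') = fst (ts!i)}. Gd i'),
      fst (snd (ts!i)), snd (snd (ts!i)))"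

definition mk_rules :: "('s \<times> ('c,'m) lcs_op \<times> 's) list \<Rightarrow> (nat \<Rightarrow> ('c \<Rightarrow> 'm list) set) \<Rightarrow> ('s,'c,'m) rule list" where
  "mk_rules ts Gd = map (mk_rule ts Gd) [0..<length ts]"

lemma mk_reg:
  fixes ts :: "('s \<times> ('c::finite,'m) lcs_op \<times> 's) list"
  assumes ts: "set ts \<subseteq> trans L" "\<forall>t\<in>set ts. fst t \<in> ctrl L y"
    and reg: "\<forall>i<length ts. regular_contents (Gd i)"
    and en: "\<forall>i<length ts. Gd i \<subseteq> opre (fst (snd (ts!i))) UNIV"
  shows "regular_strategy L y (mk_rules ts Gd)"
proof -
  have one: "case mk_rule ts Gd i of (s, X, op, s') \<Rightarrow> regular_contents X \<and> (s, op, s') \<in> trans L \<and> s \<in> ctrl L y \<and>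
        (\<forall>c m. op = Recv c m \<longrightarrow> (\<forall>x \<in> X. \<exists>w. x c = m # w))" if i: "i < length ts" for i
  proof -
    have "finite {i'. i' < i \<and> fst (ts!i') = fst (ts!i)}" by (rule finite_subset[of _ "{..<i}"]) auto
    hence "regular_contents (Gd i - (\<Union>i'\<in>{i'. i' < i \<and> fst (ts!i') = fst (ts!i)}. Gd i'))"
      using reg i by (intro rc_diff rc_Union_fin) auto
    moreover have "ts ! i \<in> set ts" using i by simp
    moreover have "\<forall>c m. fst (snd (ts!i)) = Recv c m \<longrightarrow> (\<forall>x \<in> Gd i. \<exists>w. x c = m # w)"
      using en i by (force simp: opre_def)
    ultimately show ?thesis using ts by (cases "ts!i") (auto simp: mk_rule_def)
  qed
  have two: "fst (snd (mk_rule ts Gd i)) \<inter> fst (snd (mk_rule ts Gd j)) = {}"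
    if "i < j" "fst (mk_rule ts Gd i) = fst (mk_rule ts Gd j)" for i j
    using that by (auto simp: mk_rule_def)
  show ?thesis unfolding regular_strategy_def
  proof (intro conjI allI impI)
    show "\<forall>(s, X, op, s')\<in>set (mk_rules ts Gd). regular_contents X \<and> (s, op, s') \<in> trans L \<and> s \<in> ctrl L y \<and>
        (\<forall>c m. op = Recv c m \<longrightarrow> (\<forall>x \<in> X. \<exists>w. x c = m # w))"
      using one by (auto simp: mk_rules_def)
  next
    fix i j assume i_l: "i < length (mk_rules ts Gd)" and j_l: "j < length (mk_rules ts Gd)" and "i \<noteq> j"
      and fij: "fst (mk_rules ts Gd ! i) = fst (mk_rules ts Gd ! j)"
    thus "fst (snd (mk_rules ts Gd ! i)) \<inter> fst (snd (mk_rules ts Gd ! j)) = {}"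
    proof -
      have ij: "i < length ts" "j < length ts" using i_l j_l by (simp_all add: mk_rules_def)
      hence eqs: "mk_rules ts Gd ! i = mk_rule ts Gd i" "mk_rules ts Gd ! j = mk_rule ts Gd j"
        by (simp_all add: mk_rules_def)
      show ?thesis
      proof (cases "i < j")
        case True then show ?thesis using two[of i j] fij eqs by simp
      next
        case False
        hence "j < i" using \<open>i \<noteq> j\<close> by simp
        then show ?thesis using two[of j i] fij eqs by (simp add: Int_commute)
      qed
    qed
  qed
qed

lemma ind_Some:
  assumes "induced_strategy (mk_rules ts Gd) h = Some c'" "h \<noteq> []" "last h = (s, w, True)"
  shows "\<exists>i<length ts. fst (ts!i) = s \<and> w \<in> Gd i \<and>
     c' = (snd (snd (ts!i)), op_apply (fst (snd (ts!i))) w, False)"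
proof -
  define P where "P = (\<lambda>(s'::'a, X::('b \<Rightarrow> 'c list) set, op::('b, 'c) lcs_op, t::'a). s' = s \<and> w \<in> X)"
  have "induced_strategy (mk_rules ts Gd) h = (case find P (mk_rules ts Gd) of None \<Rightarrow> None
         | Some (_, _, op, t) \<Rightarrow> Some (t, op_apply op w, False))"
    using assms(2,3) by (simp add: induced_strategy_def P_def)
  then obtain r where r: "find P (mk_rules ts Gd) = Some r"
    "c' = (case r of (_, _, op, t) \<Rightarrow> (t, op_apply op w, False))"
    using assms(1) by (cases "find P (mk_rules ts Gd)") auto
  obtain i where i: "i < length (mk_rules ts Gd)" "P (mk_rules ts Gd ! i)" "r = mk_rules ts Gd ! i"
    using find_Some_iff[THEN iffD1, OF r(1)] by blast
  have il: "i < length ts" using i(1) by (simp add: mk_rules_def)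
  hence ri: "r = mk_rule ts Gd i" using i(3) by (simp add: mk_rules_def)
  obtain a X op t where rr: "mk_rule ts Gd i = (a, X, op, t)" by (cases "mk_rule ts Gd i")
  have "P (a, X, op, t)" using i(2) i(3) ri rr by simp
  hence "a = s" "w \<in> X" by (simp_all add: P_def)
  moreover have "a = fst (ts!i)" "X \<subseteq> Gd i" "op = fst (snd (ts!i))" "t = snd (snd (ts!i))"
    using rr unfolding mk_rule_def by auto
  moreover have "c' = (t, op_apply op w, False)" using r(2) ri rr by simp
  ultimately show ?thesis using il by blast
qed

lemma ind_None:
  assumes "induced_strategy (mk_rules ts Gd) h = None" "h \<noteq> []" "last h = (s, w, True)"
    "i < length ts" "fst (ts!i) = s"
  shows "w \<notin> Gd i"
proof
  assume wi: "w \<in> Gd i"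
  define P where "P = (\<lambda>(s'::'a, X::('b \<Rightarrow> 'c list) set, op::('b, 'c) lcs_op, t::'a). s' = s \<and> w \<in> X)"
  define Q where "Q = (\<lambda>i. i < length ts \<and> fst (ts!i) = s \<and> w \<in> Gd i)"
  have Qi: "Q i" using wi assms by (simp add: Q_def)
  define i0 where "i0 = (LEAST i. Q i)"
  have Q0: "Q i0" unfolding i0_def using Qi by (rule LeastI)
  have nQ: "\<not> Q m" if "m < i0" for m using not_less_Least[of m Q] that by (simp add: i0_def)
  have i0: "i0 < length ts" "fst (ts!i0) = s" "w \<in> Gd i0" using Q0 by (simp_all add: Q_def)
  have "w \<notin> Gd m" if "m < i0" "fst (ts!m) = s" for m
    using nQ[OF that(1)] that i0(1) by (simp add: Q_def)
  hence "w \<in> fst (snd (mk_rule ts Gd i0))" using i0 by (auto simp: mk_rule_def)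
  moreover have "fst (mk_rule ts Gd i0) = s" using i0 by (simp add: mk_rule_def)
  ultimately have P: "P (mk_rule ts Gd i0)"
    by (cases "mk_rule ts Gd i0") (simp add: P_def)
  have "mk_rule ts Gd i0 \<in> set (mk_rules ts Gd)" using i0 by (simp add: mk_rules_def)
  hence "find P (mk_rules ts Gd) \<noteq> None"
    unfolding find_None_iff using P by blast
  moreover have "induced_strategy (mk_rules ts Gd) h = (case find P (mk_rules ts Gd) of None \<Rightarrow> None
         | Some (_, _, op, t) \<Rightarrow> Some (t, op_apply op w, False))"
    using assms(2,3) by (simp add: induced_strategy_def P_def)
  ultimately show False using assms(1) by (auto split: option.splits)
qed

lemma op_rel_apply: "op_rel op w w' \<Longrightarrow> w' = op_apply op w"
  by (cases op) auto

lemma lose_set: "0 < p \<Longrightarrow> p < 1 \<Longrightarrow> subseq w' w \<Longrightarrow> w' \<in> set_pmf (lose p w)"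
proof (induction w arbitrary: w')
  case Nil
  then show ?case by (auto dest: list_emb_Nil2)
next
  case (Cons m w)
  have B: "set_pmf (bernoulli_pmf p) = UNIV" using Cons.prems by (simp add: set_pmf_bernoulli)
  have "(subseq w' w) \<or> (\<exists>v. w' = m # v \<and> subseq v w)"
  proof (cases w')
    case Nil then show ?thesis by simp
  next
    case (Cons a v)
    then show ?thesis using \<open>subseq w' (m # w)\<close> by (auto simp: subseq_Cons2_iff split: if_splits)
  qed
  thus ?case
  proof
    assume "subseq w' w"
    hence "w' \<in> set_pmf (lose p w)" using Cons by blast
    thus ?thesis using B by (auto simp: set_bind_pmf intro!: bexI[of _ True] bexI[of _ w'])
  next
    assume "\<exists>v. w' = m # v \<and> subseq v w"
    then obtain v where v: "w' = m # v" "subseq v w" by blast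
    hence "v \<in> set_pmf (lose p w)" using Cons by blast
    thus ?thesis using B v by (auto simp: set_bind_pmf intro!: bexI[of _ False] bexI[of _ v])
  qed
qed

lemma exp_bounds:
  fixes M :: "'a pmf"
  assumes "\<forall>y\<in>set_pmf M. 0 \<le> f y \<and> f y \<le> (1::real)"
  shows "integrable (measure_pmf M) f" "0 \<le> measure_pmf.expectation M f" "measure_pmf.expectation M f \<le> 1"
proof -
  show I: "integrable (measure_pmf M) f"
    by (rule measure_pmf.integrable_const_bound[where B=1]) (use assms in \<open>auto simp: AE_measure_pmf_iff\<close>)
  show "0 \<le> measure_pmf.expectation M f"
    by (rule integral_nonneg_AE) (use assms in \<open>auto simp: AE_measure_pmf_iff\<close>)
  show "measure_pmf.expectation M f \<le> 1"
    by (rule measure_pmf.integral_le_const[OF I]) (use assms in \<open>auto simp: AE_measure_pmf_iff\<close>)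
qed

lemma exp_pos:
  fixes M :: "'a pmf"
  assumes "\<forall>y\<in>set_pmf M. 0 \<le> f y \<and> f y \<le> (1::real)" "y0 \<in> set_pmf M" "f y0 > 0"
  shows "measure_pmf.expectation M f > 0"
proof -
  have I: "integrable (measure_pmf M) f" and nn: "0 \<le> measure_pmf.expectation M f" using exp_bounds assms(1) by auto
  have "measure_pmf.expectation M f \<noteq> 0"
  proof
    assume "measure_pmf.expectation M f = 0"
    hence "AE x in measure_pmf M. f x = 0"
      using integral_nonneg_eq_0_iff_AE[OF I] assms(1) by (auto simp: AE_measure_pmf_iff)
    thus False using assms(2,3) by (auto simp: AE_measure_pmf_iff)
  qed
  thus ?thesis using nn by simp
qed

lemma reach_bounds: "0 \<le> reach_n L \<sigma> T n h \<and> reach_n L \<sigma> T n h \<le> 1"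
proof (induction n arbitrary: h)
  case 0
  then show ?case by simp
next
  case (Suc n)
  obtain s w b where c: "last h = (s, w, b)" by (cases "last h")
  show ?case
  proof (cases "last h \<in> T")
    case True then show ?thesis by simp
  next
    case False
    show ?thesis
    proof (cases b)
      case True
      then show ?thesis using False c Suc.IH by simp
    next
      case b: False
      have "\<forall>y\<in>set_pmf (lossy L (last h)). 0 \<le> reach_n L \<sigma> T n (h @ [y]) \<and> reach_n L \<sigma> T n (h @ [y]) \<le> 1"
        using Suc.IH by blast
      from exp_bounds[OF this] show ?thesis using False c b by simp
    qed
  qed
qed

context game begin

lemma lossy_set: "edge L (s,w,False) c' \<Longrightarrow> c' \<in> set_pmf (lossy L (s,w,False))"
proof -
  assume "edge L (s,w,False) c'"
  then obtain w' where c': "c' = (s,w',True)" "\<forall>ch. subseq (w' ch) (w ch)" by (auto simp: edge_rand)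
  have "w' ch \<in> set_pmf (lose (lam L) (w ch))" for ch using lose_set c'(2) wf_parts(6,7) by blast
  hence "pmf (lose (lam L) (w ch)) (w' ch) > 0" for ch by (simp add: pmf_positive)
  hence "pmf (Pi_pmf UNIV [] (\<lambda>ch. lose (lam L) (w ch))) w' > 0"
    by (simp add: pmf_Pi prod_pos)
  hence "w' \<in> set_pmf (Pi_pmf UNIV [] (\<lambda>ch. lose (lam L) (w ch)))" by (simp add: set_pmf_iff)
  thus ?thesis using c'(1) by (simp add: lossy_def)
qed

end


context game begin

lemma who_ctrl: "s \<in> ctrl L y \<Longrightarrow> y \<in> {0,1} \<Longrightarrow> (if s \<in> states0 L then 0 else (1::nat)) = y"
  using wf_parts(2) by (auto simp: ctrl_def)

lemma ctrl_cover: "s \<in> states L \<Longrightarrow> s \<in> ctrl L x \<or> s \<in> ctrl L (1-x)"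
  using wf_parts(3) x01 by (auto simp: ctrl_def)

lemma force_part: "\<exists>rf. regular_strategy L x rf \<and> Force L x T \<subseteq> W_reach L x (induced_strategy rf) T"
proof -
  obtain M where FM: "Force L x T = RR M" using Force_finite by blast
  have fin: "finite {t \<in> trans L. fst t \<in> ctrl L x}" using wf_parts(4) by simp
  obtain ts where ts: "set ts = {t \<in> trans L. fst t \<in> ctrl L x}" using finite_list[OF fin] by blast
  define Gf where "Gf i = (\<Union>j\<in>{..<M}. (sec (RR (Suc j)) (fst (ts!i)) True - sec (RR j) (fst (ts!i)) True)
      \<inter> opre (fst (snd (ts!i))) (sec (RR j) (snd (snd (ts!i))) False))" for i
  define rf where "rf = mk_rules ts Gf"
  have reg: "regular_strategy L x rf"
    unfolding rf_def
  proof (rule mk_reg)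
    show "set ts \<subseteq> trans L" using ts by auto
    show "\<forall>t\<in>set ts. fst t \<in> ctrl L x" using ts by auto
    show "\<forall>i<length ts. regular_contents (Gf i)"
      unfolding Gf_def using rcf_RR
      by (auto intro!: rc_Union_fin rc_inter rc_diff rc_opre simp: regular_confs_sec)
    show "\<forall>i<length ts. Gf i \<subseteq> opre (fst (snd (ts!i))) UNIV" unfolding Gf_def by (auto simp: opre_def)
  qed
  have key: "reach_prob L x f' g T c0 > 0"
    if c0: "c0 \<in> Force L x T" and H: "total_strategy L x f'" "extends_strategy (induced_strategy rf) f'"
      "total_strategy L (1 - x) g" for c0 f' g
  proof -
    define \<sigma> where "\<sigma> = (\<lambda>y. if y = x then f' else g)"
    have claim: "\<forall>h n. h \<noteq> [] \<longrightarrow> last h \<in> RR k \<longrightarrow> k \<le> n \<longrightarrow> reach_n L \<sigma> T n h > 0" for k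
    proof (induction k)
      case 0 show ?case by (simp add: RR_0)
    next
      case (Suc k)
      show ?case
      proof (intro allI impI)
        fix h n assume hne: "h \<noteq> []" and hin: "last h \<in> RR (Suc k)" and kn: "Suc k \<le> n"
        obtain n' where n: "n = Suc n'" using kn by (cases n) auto
        have kn': "k \<le> n'" using kn n by simp
        obtain s w b where cw: "last h = (s,w,b)" by (cases "last h")
        show "reach_n L \<sigma> T n h > 0"
        proof (cases "last h \<in> T")
          case True then show ?thesis by (simp add: n)
        next
          case nT: False
          show ?thesis
          proof (cases "last h \<in> RR k")
            case True then show ?thesis using Suc.IH hne kn by simp
          next
            case nR: False
            have inF: "last h \<in> Fop (RR k)" using hin by (simp add: RR_Suc)
            have rest: "last h \<in> (rstates L \<inter> Pre L (RR k)) \<union> (pstates L x \<inter> Pre L (RR k)) \<union> (pstates L (1-x) \<inter> tPre L (RR k))"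
              using inF nT nR unfolding Fop_def by blast
            have s_st: "s \<in> states L" using hin RR_confs cw by (auto simp: confs_def)
            show ?thesis
            proof (cases b)
              case False
              have red: "reach_n L \<sigma> T n h = measure_pmf.expectation (lossy L (last h)) (\<lambda>c. reach_n L \<sigma> T n' (h @ [c]))"
                using nT cw False by (simp add: n)
              from rest have "last h \<in> Pre L (RR k)" using cw False by (auto simp: pstates_def)
              then obtain c' where c': "c' \<in> RR k" "edge L (last h) c'" by (auto simp: Pre_def)
              have cs: "c' \<in> set_pmf (lossy L (last h))" using lossy_set c'(2) cw False by simp
              have pos: "reach_n L \<sigma> T n' (h @ [c']) > 0" using Suc.IH c'(1) kn' by simp
              have bnd: "\<forall>y\<in>set_pmf (lossy L (last h)). 0 \<le> reach_n L \<sigma> T n' (h @ [y]) \<and> reach_n L \<sigma> T n' (h @ [y]) \<le> 1"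
                using reach_bounds by blast
              show ?thesis unfolding red using exp_pos[OF bnd cs] pos by simp
            next
              case True
              have cwT: "last h = (s,w,True)" using cw True by simp
              define who where "who = (if s \<in> states0 L then 0 else (1::nat))"
              have red: "reach_n L \<sigma> T n h = reach_n L \<sigma> T n' (h @ [the (\<sigma> who h)])"
                using nT cwT by (simp add: n who_def)
              have nxt: "\<exists>c''. \<sigma> who h = Some c'' \<and> c'' \<in> RR k"
              proof (cases "s \<in> ctrl L x")
                case sx: True
                have "who = x" using who_ctrl sx x01 by (simp add: who_def)
                hence \<sigma>w: "\<sigma> who = f'" by (simp add: \<sigma>_def)
                have lp: "last h \<in> pstates L x" using sx cwT by (simp add: pstates_def)
                have npx: "last h \<notin> pstates L (1-x)" using sx cwT ctrl_disj by (auto simp: pstates_def)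
                have nr: "last h \<notin> rstates L" using cwT by (simp add: rstates_def)
                have inPre: "last h \<in> Pre L (RR k)" using rest lp npx nr by blast
                obtain c'' where c'': "f' h = Some c''" using H(1) lp hne by (auto simp: total_strategy_def)
                have ed: "edge L (last h) c''" using H(1) c'' unfolding total_strategy_def is_strategy_def by blast
                have k_lt: "k < M"
                proof (rule ccontr)
                  assume "\<not> k < M"
                  hence "RR (Suc k) \<subseteq> RR k" using RR_Force FM RR_mono[of M k] by auto
                  thus False using hin nR by blast
                qed
                have "c'' \<in> RR k"
                proof (cases "induced_strategy rf h")
                  case (Some c1)
                  hence "f' h = Some c1" using H(2) unfolding extends_strategy_def by blast
                  hence c1: "c'' = c1" using c'' by simp
                  obtain i where i: "i < length ts" "fst (ts!i) = s" "w \<in> Gf i"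
                    "c1 = (snd (snd (ts!i)), op_apply (fst (snd (ts!i))) w, False)"
                    using ind_Some[OF Some[unfolded rf_def] hne cwT] by blast
                  from i(3) obtain j where j: "j < M" "w \<in> sec (RR (Suc j)) s True" "w \<notin> sec (RR j) s True"
                    "w \<in> opre (fst (snd (ts!i))) (sec (RR j) (snd (snd (ts!i))) False)"
                    unfolding Gf_def using i(2) by auto
                  have jk: "j = k"
                  proof (rule ccontr)
                    assume "j \<noteq> k"
                    hence "Suc j \<le> k \<or> Suc k \<le> j" by arith
                    thus False
                    proof
                      assume "Suc j \<le> k"
                      hence "RR (Suc j) \<subseteq> RR k" by (rule RR_mono)
                      thus False using j(2) nR cwT by (auto simp: sec_def)
                    next
                      assume "Suc k \<le> j"
                      hence "RR (Suc k) \<subseteq> RR j" by (rule RR_mono)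
                      thus False using j(3) hin cwT by (auto simp: sec_def)
                    qed
                  qed
                  from j(4) obtain x' where "op_rel (fst (snd (ts!i))) w x'" "(snd (snd (ts!i)), x', False) \<in> RR j"
                    by (auto simp: opre_def sec_def)
                  hence "c1 \<in> RR k" using i(4) jk op_rel_apply[of "fst (snd (ts!i))" w x'] by simp
                  thus ?thesis using c1 by simp
                next
                  case None
                  from inPre obtain c' where c': "c' \<in> RR k" "edge L (last h) c'" by (auto simp: Pre_def)
                  from c'(2) have "(\<exists>op s' w'. (s,op,s') \<in> trans L \<and> op_rel op w w' \<and> c' = (s',w',False)) \<or>
                     ((\<nexists>op t v. (s,op,t) \<in> trans L \<and> op_rel op w v) \<and> c' = (s,w,False))"
                    using cwT by (simp add: edge_play)
                  thus ?thesis
                  proof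
                    assume "\<exists>op s' w'. (s,op,s') \<in> trans L \<and> op_rel op w w' \<and> c' = (s',w',False)"
                    then obtain op s' w' where t: "(s,op,s') \<in> trans L" "op_rel op w w'" "c' = (s',w',False)" by blast
                    have "(s,op,s') \<in> set ts" using t(1) sx ts by simp
                    then obtain i where i: "i < length ts" "ts ! i = (s,op,s')" by (auto simp: in_set_conv_nth)
                    have "w \<in> (sec (RR (Suc k)) s True - sec (RR k) s True) \<inter> opre op (sec (RR k) s' False)"
                      using hin nR cwT t c'(1) by (auto simp: sec_def opre_def)
                    hence "w \<in> Gf i" unfolding Gf_def i(2) using k_lt by auto
                    moreover have "w \<notin> Gf i" using ind_None[OF None[unfolded rf_def] hne cwT i(1)] i(2) by simp
                    ultimately show ?thesis by blast
                  next
                    assume dl: "(\<nexists>op t v. (s,op,t) \<in> trans L \<and> op_rel op w v) \<and> c' = (s,w,False)"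
                    have "c'' = (s,w,False)" using ed cwT dl by (auto simp: edge_play)
                    thus ?thesis using dl c'(1) by simp
                  qed
                qed
                thus ?thesis using c'' \<sigma>w by simp
              next
                case sx: False
                have sy: "s \<in> ctrl L (1-x)" using ctrl_cover[OF s_st] sx by blast
                have "who = 1 - x" using who_ctrl[OF sy] x01 by (auto simp: who_def)
                hence \<sigma>w: "\<sigma> who = g" using x01 by (auto simp: \<sigma>_def)
                have lp: "last h \<in> pstates L (1-x)" using sy cwT by (simp add: pstates_def)
                have npx: "last h \<notin> pstates L x" using sy cwT ctrl_disj by (auto simp: pstates_def)
                have nr: "last h \<notin> rstates L" using cwT by (simp add: rstates_def)
                have inT: "last h \<in> tPre L (RR k)" using rest lp npx nr by blast
                obtain c'' where c'': "g h = Some c''" using H(3) lp hne by (auto simp: total_strategy_def)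
                have ed: "edge L (last h) c''" using H(3) c'' unfolding total_strategy_def is_strategy_def by blast
                have "c'' \<in> confs L" using edge_confs[OF ed] by simp
                moreover have "last h \<notin> Pre L (confs L - RR k)" using inT by (simp add: tPre_def)
                ultimately have "c'' \<in> RR k" using ed hin RR_confs unfolding Pre_def by blast
                thus ?thesis using c'' \<sigma>w by simp
              qed
              then obtain c'' where "\<sigma> who h = Some c''" "c'' \<in> RR k" by blast
              hence "reach_n L \<sigma> T n' (h @ [the (\<sigma> who h)]) > 0" using Suc.IH kn' by simp
              thus ?thesis using red by simp
            qed
          qed
        qed
      qed
    qed
    have "reach_n L \<sigma> T M [c0] > 0" using claim[of M] c0 FM by simp
    moreover have "bdd_above (range (\<lambda>n. reach_n L \<sigma> T n [c0]))"
    proof (rule bdd_aboveI[of _ 1])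
      fix y assume "y \<in> range (\<lambda>n. reach_n L \<sigma> T n [c0])"
      then obtain n where "y = reach_n L \<sigma> T n [c0]" by blast
      thus "y \<le> 1" using reach_bounds[of L \<sigma> T n "[c0]"] by simp
    qed
    ultimately have "(SUP n. reach_n L \<sigma> T n [c0]) > 0"
      by (meson cSUP_upper UNIV_I less_le_trans)
    thus ?thesis by (simp add: reach_prob_def \<sigma>_def)
  qed
  have "Force L x T \<subseteq> W_reach L x (induced_strategy rf) T"
    unfolding W_reach_def using key Force_confs by blast
  thus ?thesis using reg by blast
qed

end


context game begin

lemma avoid_part: "\<exists>ra. regular_strategy L (1 - x) ra \<and> Avoid L x T \<subseteq> V_safe L (1 - x) (induced_strategy ra) (confs L - T)"
proof -
  obtain M where FM: "Force L x T = RR M" using Force_finite by blast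
  define F where "F = Force L x T"
  have fin: "finite {t \<in> trans L. fst t \<in> ctrl L (1-x)}" using wf_parts(4) by simp
  obtain ts where ts: "set ts = {t \<in> trans L. fst t \<in> ctrl L (1-x)}" using finite_list[OF fin] by blast
  define Ga where "Ga i = - sec F (fst (ts!i)) True \<inter> opre (fst (snd (ts!i))) (- sec F (snd (snd (ts!i))) False)" for i
  define ra where "ra = mk_rules ts Ga"
  have rF: "regular_confs F" using FM rcf_RR by (simp add: F_def)
  have reg: "regular_strategy L (1-x) ra"
    unfolding ra_def
  proof (rule mk_reg)
    show "set ts \<subseteq> trans L" using ts by auto
    show "\<forall>t\<in>set ts. fst t \<in> ctrl L (1-x)" using ts by auto
    show "\<forall>i<length ts. regular_contents (Ga i)"
      unfolding Ga_def using rF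
      by (auto intro!: rc_inter rc_compl rc_opre simp: regular_confs_sec)
    show "\<forall>i<length ts. Ga i \<subseteq> opre (fst (snd (ts!i))) UNIV" unfolding Ga_def by (auto simp: opre_def)
  qed
  have FF: "Fop F = F" using Force_fix by (simp add: F_def)
  have Fc: "F \<subseteq> confs L" using Force_confs by (simp add: F_def)
  have safe: "\<forall>i. \<rho> i \<in> confs L - F"
    if c0: "c0 \<in> confs L - F" and run: "is_run L c0 \<rho>" and cons: "consistent_run L (induced_strategy ra) \<rho>" for c0 \<rho>
  proof
    fix i show "\<rho> i \<in> confs L - F"
    proof (induction i)
      case 0 then show ?case using c0 run by (simp add: is_run_def)
    next
      case (Suc i)
      have ed: "edge L (\<rho> i) (\<rho> (Suc i))" using run by (simp add: is_run_def)
      have c'c: "\<rho> (Suc i) \<in> confs L" using edge_confs[OF ed] by simp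
      obtain s w b where cw: "\<rho> i = (s,w,b)" by (cases "\<rho> i")
      have s_st: "s \<in> states L" using Suc.IH cw by (auto simp: confs_def)
      have notF: "\<rho> (Suc i) \<notin> F"
      proof
        assume c'F: "\<rho> (Suc i) \<in> F"
        hence inPre: "\<rho> i \<in> Pre L F" using ed Suc.IH unfolding Pre_def by blast
        show False
        proof (cases b)
          case False
          hence "\<rho> i \<in> rstates L" using cw s_st by (simp add: rstates_def)
          hence "\<rho> i \<in> Fop F" using inPre unfolding Fop_def by blast
          thus False using FF Suc.IH by simp
        next
          case True
          have cwT: "\<rho> i = (s,w,True)" using cw True by simp
          show False
          proof (cases "s \<in> ctrl L x")
            case True
            hence "\<rho> i \<in> pstates L x" using cwT by (simp add: pstates_def)
            hence "\<rho> i \<in> Fop F" using inPre unfolding Fop_def by blast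
            thus False using FF Suc.IH by simp
          next
            case sx: False
            have sy: "s \<in> ctrl L (1-x)" using ctrl_cover[OF s_st] sx by blast
            have lp: "\<rho> i \<in> pstates L (1-x)" using sy cwT by (simp add: pstates_def)
            have "\<rho> i \<notin> tPre L F"
            proof
              assume "\<rho> i \<in> tPre L F"
              hence "\<rho> i \<in> Fop F" using lp unfolding Fop_def by blast
              thus False using FF Suc.IH by simp
            qed
            hence "\<rho> i \<in> Pre L (confs L - F)" using Suc.IH by (simp add: tPre_def)
            then obtain c2 where c2: "c2 \<in> confs L" "c2 \<notin> F" "edge L (\<rho> i) c2" unfolding Pre_def by blast
            define hh where "hh = map \<rho> [0..<Suc i]"
            have hne: "hh \<noteq> []" by (simp add: hh_def)
            have lh: "last hh = (s,w,True)" using cwT by (simp add: hh_def)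
            show False
            proof (cases "induced_strategy ra hh")
              case (Some c1)
              hence "\<rho> (Suc i) = c1" using cons unfolding consistent_run_def hh_def by blast
              obtain i0 where i0: "i0 < length ts" "fst (ts!i0) = s" "w \<in> Ga i0"
                "c1 = (snd (snd (ts!i0)), op_apply (fst (snd (ts!i0))) w, False)"
                using ind_Some[OF Some[unfolded ra_def] hne lh] by blast
              from i0(3) obtain x' where "op_rel (fst (snd (ts!i0))) w x'" "(snd (snd (ts!i0)), x', False) \<notin> F"
                unfolding Ga_def by (auto simp: opre_def sec_def)
              hence "c1 \<notin> F" using i0(4) op_rel_apply[of "fst (snd (ts!i0))" w x'] by simp
              thus False using c'F \<open>\<rho> (Suc i) = c1\<close> by simp
            next
              case None
              from c2(3) have "(\<exists>op s' w'. (s,op,s') \<in> trans L \<and> op_rel op w w' \<and> c2 = (s',w',False)) \<or>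
                 ((\<nexists>op t v. (s,op,t) \<in> trans L \<and> op_rel op w v) \<and> c2 = (s,w,False))"
                using cwT by (simp add: edge_play)
              thus False
              proof
                assume "\<exists>op s' w'. (s,op,s') \<in> trans L \<and> op_rel op w w' \<and> c2 = (s',w',False)"
                then obtain op s' w' where t: "(s,op,s') \<in> trans L" "op_rel op w w'" "c2 = (s',w',False)" by blast
                have "(s,op,s') \<in> set ts" using t(1) sy ts by simp
                then obtain i0 where i0: "i0 < length ts" "ts ! i0 = (s,op,s')" by (auto simp: in_set_conv_nth)
                have "w \<in> Ga i0" unfolding Ga_def i0(2) using Suc.IH cwT t c2(2)
                  by (auto simp: sec_def opre_def)
                moreover have "w \<notin> Ga i0" using ind_None[OF None[unfolded ra_def] hne lh i0(1)] i0(2) by simp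
                ultimately show False by blast
              next
                assume dl: "(\<nexists>op t v. (s,op,t) \<in> trans L \<and> op_rel op w v) \<and> c2 = (s,w,False)"
                have "\<rho> (Suc i) = (s,w,False)" using ed cwT dl by (auto simp: edge_play)
                thus False using dl c2(2) c'F by simp
              qed
            qed
          qed
        qed
      qed
      show ?case using c'c notF by simp
    qed
  qed
  have "Avoid L x T \<subseteq> V_safe L (1 - x) (induced_strategy ra) (confs L - T)"
  proof
    fix c0 assume "c0 \<in> Avoid L x T"
    hence c0: "c0 \<in> confs L - F" by (simp add: Avoid_def F_def)
    have "\<forall>i. \<rho> i \<in> confs L - T" if "is_run L c0 \<rho>" "consistent_run L (induced_strategy ra) \<rho>" for \<rho>
      using safe[OF c0 that] T_Force by (auto simp: F_def)
    thus "c0 \<in> V_safe L (1 - x) (induced_strategy ra) (confs L - T)"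
      using c0 unfolding V_safe_def by blast
  qed
  thus ?thesis using reg by blast
qed

end

theorem mainTheorem18:
  fixes L :: "('s, 'c::finite, 'm::finite) sglcs" and x :: nat and T :: "('s, 'c, 'm) conf set"
  assumes "wf_sglcs L" and "x \<in> {0, 1}" and "T \<subseteq> confs L" and "regular_confs T"
  shows "\<exists>rf ra. regular_strategy L x rf \<and> regular_strategy L (1 - x) ra \<and>
           Force L x T \<subseteq> W_reach L x (induced_strategy rf) T \<and>
           Avoid L x T \<subseteq> V_safe L (1 - x) (induced_strategy ra) (confs L - T)"
proof -
  interpret game L x T using assms by unfold_locales
  show ?thesis using force_part avoid_part by blast
qed


end
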